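(* Let $q\in\mathbb{C}$ with $0<|q|<1$, and let $a,b,c,d,e$ be complex numbers such that at least one of $a$, $b$, $c$ is of the form $q^n$ with $n\in\{1,2,\ldots\}$ (and such that all terms below are well defined). Then \[ \sum_{k=-\infty}^\infty \frac{(q/a,q/b,q/c,q/d,q/e)_k}{(a,bq,cq,dq,eq)_k}(abcde)^k =\frac{a\,(q,ab,bc,ac)_\infty}{q\,(a,bq,cq,abc/q)_\infty} \sum_{k=0}^\infty\frac{(q/a,q/b,q/c,de)_k}{(q,q^2/abc,dq,eq)_k}q^k. \]
   Context: For an integer $n$, the $q$-shifted factorial is $(a)_n=(a;q)_n$ with $(a)_0=1$, $(a)_n=(1-a)(1-aq)\cdots(1-aq^{n-1})$ for $n\ge1$, and $(a)_n=[(1-aq^{-1})(1-aq^{-2})\cdots(1-aq^{n})]^{-1}$ for $n\le -1$. Also $(a_1,\ldots,a_m)_n=(a_1)_n\cdots(a_m)_n$ and $(a_1,\ldots,a_m)_\infty=\lim_{n\to\infty}(a_1,\ldots,a_m)_n$. *)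

theory Defs
  imports "HOL-Analysis.Analysis"
begin

definition qpoch :: "complex \<Rightarrow> complex \<Rightarrow> int \<Rightarrow> complex" where
  "qpoch a q n =
     (if n \<ge> 0 then (\<Prod>j<nat n. (1 - a * q ^ j))
      else inverse (\<Prod>j\<in>{1..nat (- n)}. (1 - a / q ^ j)))"

definition qpoch_inf :: "complex \<Rightarrow> complex \<Rightarrow> complex" where
  "qpoch_inf a q = lim (\<lambda>n. qpoch a q (int n))"

end

theory Submission
  imports Defs
begin

definition qp :: "complex \<Rightarrow> complex \<Rightarrow> nat \<Rightarrow> complex" where
  "qp x q n = (\<Prod>i<n. 1 - x*q^i)"

lemma qp_0[simp]: "qp x q 0 = 1" by (simp add: qp_def)
lemma qp_Suc: "qp x q (Suc n) = qp x q n * (1 - x*q^n)" by (simp add: qp_def)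
lemma qp_Suc2: "qp x q (Suc n) = (1 - x) * qp (x*q) q n"
  by (induction n) (auto simp: qp_Suc mult_ac power_Suc)
lemma qp_add: "qp x q (m+n) = qp x q m * qp (x*q^m) q n"
  by (induction n) (auto simp: qp_Suc mult_ac power_add)

definition sT where
 "sT q l bt gm dl k j = qp (1/q^k) q j * qp (l*q^k) q j * qp dl q j / (qp q q j * qp bt q j * qp gm q j) * q^j"

definition sH where
 "sH q l b c bt gm dl k j = (if j = 0 then 0 else
    (1 - l*q^(2*k+1)) / ((1 - bt*q^k)*(1 - gm*q^k)) * (qp (1/q^k) q (j-1) * qp (l*q^(Suc k)) q (j-1) * qp dl q j)
     / (qp q q (j-1) * qp bt q (j-1) * qp gm q (j-1)))"

lemma fac_lemma:
  fixes P1 P2 P3 Dq Db Dc f1 f2 f3 u1 u2 u3 :: complex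
  assumes "Dq \<noteq> 0" "Db \<noteq> 0" "Dc \<noteq> 0" "f1 \<noteq> 0" "f2 \<noteq> 0" "f3 \<noteq> 0"
  shows "(P1 * u1) * (P2 * u2) * (P3 * u3) / ((Dq*f1) * (Db*f2) * (Dc*f3)) = 
         P1*P2*P3/(Dq*Db*Dc) * (u1*u2*u3/(f1*f2*f3))"
  using assms by (simp add: field_simps)

lemma key1:
  fixes q x y l b c bt gm dl f1 f2 f3 e1 e2 :: complex
  assumes nz: "q \<noteq> 0" "x \<noteq> 0" "b \<noteq> 0" "c \<noteq> 0" "f1 \<noteq> 0" "f2 \<noteq> 0" "f3 \<noteq> 0"
     "e1 \<noteq> 0" "e2 \<noteq> 0"
  assumes dd: "bt = l*q/b" "gm = l*q/c" "dl = l*q/(b*c)"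
  assumes ff: "f1 = 1-q*y" "f2 = 1-bt*y" "f3 = 1-gm*y" "e1 = 1 - bt*x" "e2 = 1 - gm*x"
  shows "(1 - 1/(q*x)) * (1 - l*(q*x)*y) * (q*y) / (f1*f2*f3)
       - (1 - b*x)*(1-c*x)*dl / (e1*e2) * ((1 - 1/x*y) * (1 - l*x) * (q*y) / (f1*f2*f3))
       = (1 - l*q*x^2) / (e1*e2) * ((1 - 1/x*y) * (1 - l*(q*x)*y) * (1 - dl*(q*y)) / (f1*f2*f3) - 1)"
proof -
  have "(1 - 1/(q*x)) * (1 - l*(q*x)*y) * (q*y) / (f1*f2*f3)
       - (1 - b*x)*(1-c*x)*dl / (e1*e2) * ((1 - 1/x*y) * (1 - l*x) * (q*y) / (f1*f2*f3))
       - (1 - l*q*x^2) / (e1*e2) * ((1 - 1/x*y) * (1 - l*(q*x)*y) * (1 - dl*(q*y)) / (f1*f2*f3) - 1)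
     = ((q*x - 1) * (1 - l*q*x*y) * y * e1 * e2
       - (1 - b*x)*(1-c*x)*dl * ((x - y) * (1 - l*x) * (q*y))
       - (1 - l*q*x^2) * ((x - y) * (1 - l*q*x*y) * (1 - dl*(q*y)) - x * (f1*f2*f3))) / (x * (f1*f2*f3) * e1 * e2)"
    using nz by (simp add: field_simps)
  also have "... = 0"
    unfolding ff dd using nz by (simp add: field_simps power2_eq_square)
  finally show ?thesis by simp
qed


lemma key0:
  fixes q x l b c bt gm dl e1 e2 :: complex
  assumes nz: "q \<noteq> 0" "b \<noteq> 0" "c \<noteq> 0" "e1 \<noteq> 0" "e2 \<noteq> 0"
  assumes dd: "bt = l*q/b" "gm = l*q/c" "dl = l*q/(b*c)"
  assumes ff: "e1 = 1 - bt*x" "e2 = 1 - gm*x"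
  shows "1 - (1 - b*x)*(1-c*x)*dl / (e1*e2) = (1 - l*q*x^2) / (e1*e2) * (1 - dl)"
proof -
  have "1 - (1 - b*x)*(1-c*x)*dl / (e1*e2) - (1 - l*q*x^2) / (e1*e2) * (1 - dl)
     = (e1*e2 - (1 - b*x)*(1-c*x)*dl - (1 - l*q*x^2) * (1 - dl)) / (e1*e2)"
    using nz by (simp add: field_simps)
  also have "... = 0"
    unfolding ff dd using nz by (simp add: field_simps power2_eq_square)
  finally show ?thesis by simp
qed

lemma lin_comb:
  fixes P t1 t2 r C S :: complex
  assumes "t1 - r*t2 = C*(S-1)"
  shows "P*t1 - r*(P*t2) = P*(C*S) - P*C"
proof -
  have "P*t1 - r*(P*t2) = P*(t1 - r*t2)" by (simp add: algebra_simps)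
  also have "... = P*(C*(S-1))" using assms by simp
  also have "... = P*(C*S) - P*C" by (simp add: algebra_simps)
  finally show ?thesis .
qed

lemma lin_comb2:
  fixes P t1 t2 r S1 S2 :: complex
  assumes "t1 - r*t2 = S1 - S2"
  shows "P*t1 - r*(P*t2) = P*S1 - P*S2"
proof -
  have "P*t1 - r*(P*t2) = P*(t1 - r*t2)" by (simp add: algebra_simps)
  also have "... = P*(S1-S2)" using assms by simp
  also have "... = P*S1 - P*S2" by (simp add: algebra_simps)
  finally show ?thesis .
qed

lemma s_step:
  fixes q l b c bt gm dl :: complex
  assumes nz: "q \<noteq> 0" "b \<noteq> 0" "c \<noteq> 0"
  assumes dd: "bt = l*q/b" "gm = l*q/c" "dl = l*q/(b*c)"
  assumes nzj: "qp q q j \<noteq> 0" "qp bt q j \<noteq> 0" "qp gm q j \<noteq> 0"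
  assumes nzk: "1 - bt*q^k \<noteq> 0" "1 - gm*q^k \<noteq> 0"
  shows "sT q l bt gm dl (Suc k) j - (1-b*q^k)*(1-c*q^k)*dl / ((1-bt*q^k)*(1-gm*q^k)) * sT q l bt gm dl k j
       = sH q l b c bt gm dl k (Suc j) - sH q l b c bt gm dl k j"
proof (cases j)
  case 0
  then show ?thesis
    using key0[OF nz nzk dd refl refl]
    by (simp add: sT_def sH_def qp_Suc power_add power_mult power2_eq_square mult_ac)
next
  case (Suc i)
  define x where "x = q^k"
  define y where "y = q^i"
  define P1 where "P1 = qp (1/q^k) q i"
  define P2 where "P2 = qp (l*q^Suc k) q i"
  define P3 where "P3 = qp dl q (Suc i)"
  define Dq where "Dq = qp q q i"
  define Db where "Db = qp bt q i"
  define Dc where "Dc = qp gm q i"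
  have x0: "x \<noteq> 0" using nz by (simp add: x_def)
  have nzi: "Dq \<noteq> 0" "Db \<noteq> 0" "Dc \<noteq> 0" "1 - q*y \<noteq> 0" "1 - bt*y \<noteq> 0" "1 - gm*y \<noteq> 0"
    using nzj by (auto simp: Suc Dq_def Db_def Dc_def y_def qp_Suc mult_ac)
  have nzk': "1 - bt*x \<noteq> 0" "1 - gm*x \<noteq> 0" using nzk by (auto simp: x_def)
  have E: "Dq * (1-q*y) * (Db * (1-bt*y)) * (Dc * (1-gm*y)) = (Dq*Db*Dc) * ((1-q*y)*(1-bt*y)*(1-gm*y))"
    by (simp add: mult_ac)
  have T1: "sT q l bt gm dl (Suc k) j = P1*P2*P3/(Dq*Db*Dc) * ((1 - 1/(q*x)) * (1 - l*(q*x)*y) * (q*y) / ((1-q*y)*(1-bt*y)*(1-gm*y)))"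
  proof -
    have a: "qp (1/q^Suc k) q (Suc i) = (1 - 1/(q*x)) * P1"
      unfolding qp_Suc2 P1_def x_def using nz by (simp add: field_simps)
    have b: "qp (l*q^Suc k) q (Suc i) = P2 * (1 - l*(q*x)*y)"
      unfolding qp_Suc P2_def x_def y_def by (simp add: mult_ac)
    have c: "qp q q (Suc i) = Dq * (1-q*y)" "qp bt q (Suc i) = Db * (1-bt*y)" "qp gm q (Suc i) = Dc * (1-gm*y)"
      unfolding qp_Suc Dq_def Db_def Dc_def y_def by (simp_all add: mult_ac)
    show ?thesis unfolding sT_def Suc a b c E P3_def[symmetric] using nzi nz(1) x0
      by (simp add: y_def field_simps)
  qed
  have T2: "sT q l bt gm dl k j = P1*P2*P3/(Dq*Db*Dc) * ((1 - 1/x*y) * (1 - l*x) * (q*y) / ((1-q*y)*(1-bt*y)*(1-gm*y)))"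
  proof -
    have a: "qp (1/q^k) q (Suc i) = P1 * (1 - 1/x*y)"
      unfolding qp_Suc P1_def x_def y_def using nz by (simp add: field_simps)
    have b: "qp (l*q^k) q (Suc i) = (1 - l*x) * P2"
      unfolding qp_Suc2 P2_def x_def by (simp add: mult_ac)
    have c: "qp q q (Suc i) = Dq * (1-q*y)" "qp bt q (Suc i) = Db * (1-bt*y)" "qp gm q (Suc i) = Dc * (1-gm*y)"
      unfolding qp_Suc Dq_def Db_def Dc_def y_def by (simp_all add: mult_ac)
    show ?thesis unfolding sT_def Suc a b c E P3_def[symmetric] using nzi nz(1) x0
      by (simp add: y_def field_simps)
  qed
  have H2: "sH q l b c bt gm dl k (Suc j) = P1*P2*P3/(Dq*Db*Dc) * ((1 - l*q*x^2) / ((1-bt*x)*(1-gm*x)) * ((1 - 1/x*y) * (1 - l*(q*x)*y) * (1 - dl*(q*y)) / ((1-q*y)*(1-bt*y)*(1-gm*y))))"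
  proof -
    have a: "qp (1/x) q (Suc i) = P1 * (1 - 1/x*y)"
      unfolding qp_Suc P1_def x_def y_def using nz by (simp add: field_simps)
    have b: "qp (l*q^Suc k) q (Suc i) = P2 * (1 - l*(q*x)*y)"
      unfolding qp_Suc P2_def x_def y_def by (simp add: mult_ac)
    have d: "qp dl q (Suc (Suc i)) = P3 * (1 - dl*(q*y))"
      unfolding qp_Suc[of _ _ "Suc i"] P3_def y_def by (simp add: mult_ac)
    have c: "qp q q (Suc i) = Dq * (1-q*y)" "qp bt q (Suc i) = Db * (1-bt*y)" "qp gm q (Suc i) = Dc * (1-gm*y)"
      unfolding qp_Suc Dq_def Db_def Dc_def y_def by (simp_all add: mult_ac)
    have xx: "q^(2*k+1) = q*x^2" by (simp add: x_def power_mult power_add mult_ac)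
    have h: "sH q l b c bt gm dl k (Suc j) = (1 - l*q^(2*k+1)) / ((1 - bt*q^k)*(1 - gm*q^k)) * (qp (1/q^k) q (Suc i) * qp (l*q^(Suc k)) q (Suc i) * qp dl q (Suc(Suc i))) / (qp q q (Suc i) * qp bt q (Suc i) * qp gm q (Suc i))"
      unfolding sH_def Suc by simp
    show ?thesis unfolding h x_def[symmetric] xx unfolding a b c d E using nzi nzk' nz(1) x0
      by (simp add: field_simps)
  qed
  have H1: "sH q l b c bt gm dl k j = P1*P2*P3/(Dq*Db*Dc) * ((1 - l*q*x^2) / ((1-bt*x)*(1-gm*x)))"
  proof -
    have xx: "q^(2*k+1) = q*x^2" by (simp add: x_def power_mult power_add mult_ac)
    have h: "sH q l b c bt gm dl k j = (1 - l*q^(2*k+1)) / ((1 - bt*q^k)*(1 - gm*q^k)) * (P1 * P2 * P3) / (Dq * Db * Dc)"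
      unfolding sH_def Suc P1_def P2_def P3_def Dq_def Db_def Dc_def by simp
    show ?thesis unfolding h xx x_def[symmetric] using nzi nzk' nz(1) x0
      by (simp add: field_simps)
  qed
  have K: "(1 - 1/(q*x)) * (1 - l*(q*x)*y) * (q*y) / ((1-q*y)*(1-bt*y)*(1-gm*y))
       - (1 - b*x)*(1-c*x)*dl / ((1-bt*x)*(1-gm*x)) * ((1 - 1/x*y) * (1 - l*x) * (q*y) / ((1-q*y)*(1-bt*y)*(1-gm*y)))
       = (1 - l*q*x^2) / ((1-bt*x)*(1-gm*x)) * ((1 - 1/x*y) * (1 - l*(q*x)*y) * (1 - dl*(q*y)) / ((1-q*y)*(1-bt*y)*(1-gm*y)) - 1)"
    by (rule key1[OF nz(1) x0 nz(2,3) nzi(4-6) nzk' dd refl refl refl refl refl])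
  show ?thesis unfolding T1 T2 H1 H2 x_def[symmetric]
    by (rule lin_comb[OF K])
qed


lemma qp_nz_le: "j \<le> n \<Longrightarrow> qp x q n \<noteq> 0 \<Longrightarrow> qp x q j \<noteq> 0"
  using qp_add[of x q j "n-j"] by auto

lemma qp_inv_zero: "q \<noteq> 0 \<Longrightarrow> k < n \<Longrightarrow> qp (1/q^k) q n = 0"
  unfolding qp_def by (rule prod_zero) (auto intro!: bexI[of _ k])

lemma telesc: "(\<Sum>j\<le>n. f (Suc j) - f j) = f (Suc n) - (f 0 :: complex)"
  by (induction n) (auto simp: algebra_simps)

lemma saal:
  fixes q l b c bt gm dl :: complex
  assumes nz: "q \<noteq> 0" "b \<noteq> 0" "c \<noteq> 0"
  assumes dd: "bt = l*q/b" "gm = l*q/c" "dl = l*q/(b*c)"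
  shows "qp q q k \<noteq> 0 \<Longrightarrow> qp bt q k \<noteq> 0 \<Longrightarrow> qp gm q k \<noteq> 0 \<Longrightarrow>
    (\<Sum>j\<le>k. sT q l bt gm dl k j) = qp b q k * qp c q k / (qp bt q k * qp gm q k) * dl^k"
proof (induction k)
  case 0
  then show ?case by (simp add: sT_def)
next
  case (Suc k)
  have nk: "qp q q k \<noteq> 0" "qp bt q k \<noteq> 0" "qp gm q k \<noteq> 0"
    using Suc.prems qp_nz_le[of k "Suc k"] by auto
  have e: "1 - bt*q^k \<noteq> 0" "1 - gm*q^k \<noteq> 0" using Suc.prems by (auto simp: qp_Suc)
  define \<rho> where "\<rho> = (1-b*q^k)*(1-c*q^k)*dl / ((1-bt*q^k)*(1-gm*q^k))"
  have st: "sT q l bt gm dl (Suc k) j = \<rho> * sT q l bt gm dl k j + (sH q l b c bt gm dl k (Suc j) - sH q l b c bt gm dl k j)"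
    if "j \<le> Suc k" for j
  proof -
    have "qp q q j \<noteq> 0" "qp bt q j \<noteq> 0" "qp gm q j \<noteq> 0"
      using Suc.prems qp_nz_le[OF that] by auto
    from s_step[OF nz dd this e] show ?thesis unfolding \<rho>_def by (simp add: algebra_simps)
  qed
  have "(\<Sum>j\<le>Suc k. sT q l bt gm dl (Suc k) j)
      = (\<Sum>j\<le>Suc k. \<rho> * sT q l bt gm dl k j + (sH q l b c bt gm dl k (Suc j) - sH q l b c bt gm dl k j))"
    by (rule sum.cong) (auto simp: st)
  also have "... = \<rho> * (\<Sum>j\<le>Suc k. sT q l bt gm dl k j) + (sH q l b c bt gm dl k (Suc (Suc k)) - sH q l b c bt gm dl k 0)"
    by (simp only: sum.distrib sum_distrib_left telesc)
  also have "sH q l b c bt gm dl k (Suc (Suc k)) = 0"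
    using qp_inv_zero[OF nz(1), of k "Suc k"] by (simp add: sH_def)
  also have "sH q l b c bt gm dl k 0 = 0" by (simp add: sH_def)
  also have "sT q l bt gm dl k (Suc k) = 0"
    using qp_inv_zero[OF nz(1), of k "Suc k"] by (simp add: sT_def)
  hence "(\<Sum>j\<le>Suc k. sT q l bt gm dl k j) = (\<Sum>j\<le>k. sT q l bt gm dl k j)" by simp
  also have "... = qp b q k * qp c q k / (qp bt q k * qp gm q k) * dl^k" using Suc.IH nk by simp
  finally show ?case unfolding \<rho>_def using nk e by (simp add: qp_Suc field_simps)
qed


definition f6T where
 "f6T q A D E al ep M m = (1 - A*q^(2*m))/(1-A) * (qp A q m * qp D q m * qp E q m * qp (1/q^M) q m)
     / (qp q q m * qp al q m * qp ep q m * qp (A*q^(M+1)) q m) * (A*q^(M+1)/(D*E))^m"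

definition f6H where
 "f6H q A D E al ep M m = (if m = 0 then 0 else
     qp (A*q) q (m-1) * qp D q m * qp E q m * qp (1/q^M) q (m-1)
     / ((1 - al*q^M)*(1-ep*q^M) * qp q q (m-1) * qp al q (m-1) * qp ep q (m-1) * qp (A*q^(M+2)) q (m-1))
     * (A*q^(M+1)/(D*E))^m)"

lemma key6:
  fixes q x y A D E al ep w f1 f2 f3 g h e1 e2 :: complex
  assumes nz: "q \<noteq> 0" "x \<noteq> 0" "D \<noteq> 0" "E \<noteq> 0" "f1 \<noteq> 0" "f2 \<noteq> 0" "f3 \<noteq> 0"
     "g \<noteq> 0" "h \<noteq> 0" "e1 \<noteq> 0" "e2 \<noteq> 0"
  assumes dd: "al = A*q/D" "ep = A*q/E" "w = A*q*x/(D*E)"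
  assumes ff: "f1 = 1-q*y" "f2 = 1-al*y" "f3 = 1-ep*y" "g = 1 - A*q^2*x*y" "h = 1 - A*q*x"
     "e1 = 1 - al*x" "e2 = 1 - ep*x"
  shows "(1-A*q^2*y^2)*(1-1/(q*x))/(f1*f2*f3*g)*(q*y)
     - h*(1-w)/(e1*e2) * ((1-A*q^2*y^2)*(1-y/x)/(f1*f2*f3*h))
     = (1-A*q*y)*(1-D*q*y)*(1-E*q*y)*(1-y/x)/(e1*e2*f1*f2*f3*g)*w - 1/(e1*e2)"
proof -
  have "(1-A*q^2*y^2)*(1-1/(q*x))/(f1*f2*f3*g)*(q*y)
     - h*(1-w)/(e1*e2) * ((1-A*q^2*y^2)*(1-y/x)/(f1*f2*f3*h))
     - ((1-A*q*y)*(1-D*q*y)*(1-E*q*y)*(1-y/x)/(e1*e2*f1*f2*f3*g)*w - 1/(e1*e2))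
     = ((1-A*q^2*y^2)*(q*x-1)*(q*y)*e1*e2 - (1-w)*(1-A*q^2*y^2)*(x-y)*q*g
        - (1-A*q*y)*(1-D*q*y)*(1-E*q*y)*(x-y)*q*w + q*x*f1*f2*f3*g) / (q*x*f1*f2*f3*g*e1*e2)"
    using nz by (simp add: field_simps)
  also have "... = 0"
    unfolding ff dd using nz by (simp add: field_simps power2_eq_square)
  finally show ?thesis by simp
qed


lemma key60:
  fixes q x A D E al ep e1 e2 :: complex
  assumes nz: "q \<noteq> 0" "D \<noteq> 0" "E \<noteq> 0" "e1 \<noteq> 0" "e2 \<noteq> 0"
  assumes dd: "al = A*q/D" "ep = A*q/E"
  assumes ff: "e1 = 1 - al*x" "e2 = 1 - ep*x"
  shows "1 - (1 - A*q*x)*(1 - A*q*x/(D*E))/(e1*e2) = (1-D)*(1-E)/(e1*e2) * (A*q*x/(D*E))"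
proof -
  have "1 - (1 - A*q*x)*(1 - A*q*x/(D*E))/(e1*e2) - (1-D)*(1-E)/(e1*e2) * (A*q*x/(D*E))
     = (e1*e2 - (1 - A*q*x)*(1 - A*q*x/(D*E)) - (1-D)*(1-E) * (A*q*x/(D*E)))/(e1*e2)"
    using nz by (simp add: field_simps)
  also have "... = 0"
    unfolding ff dd using nz by (simp add: field_simps)
  finally show ?thesis by simp
qed

lemma s6_step:
  fixes q A D E al ep :: complex
  assumes nz: "q \<noteq> 0" "D \<noteq> 0" "E \<noteq> 0" "1 - A \<noteq> 0"
  assumes dd: "al = A*q/D" "ep = A*q/E"
  assumes nzm: "qp q q m \<noteq> 0" "qp al q m \<noteq> 0" "qp ep q m \<noteq> 0" "qp (A*q^(M+2)) q m \<noteq> 0"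
  assumes nzM: "1 - A*q^(M+1) \<noteq> 0" "1 - al*q^M \<noteq> 0" "1 - ep*q^M \<noteq> 0"
  shows "f6T q A D E al ep (Suc M) m - (1 - A*q^(M+1))*(1 - A*q^(M+1)/(D*E))/((1-al*q^M)*(1-ep*q^M)) * f6T q A D E al ep M m
       = f6H q A D E al ep M (Suc m) - f6H q A D E al ep M m"
proof (cases m)
  case 0
  have "1 - (1 - A*q*q^M)*(1 - A*q*q^M/(D*E))/((1-al*q^M)*(1-ep*q^M)) = (1-D)*(1-E)/((1-al*q^M)*(1-ep*q^M)) * (A*q*q^M/(D*E))"
    by (rule key60[OF nz(1-3) nzM(2,3) dd refl refl])
  then show ?thesis using 0 nz(4) by (simp add: f6T_def f6H_def qp_Suc mult_ac)
next
  case (Suc i)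
  define x where "x = q^M"
  define y where "y = q^i"
  define w where "w = A*q*x/(D*E)"
  define Z where "Z = w^i"
  define PA where "PA = qp (A*q) q i"
  define PD where "PD = qp D q i"
  define PE where "PE = qp E q i"
  define P1 where "P1 = qp (1/q^M) q i"
  define Dq where "Dq = qp q q i"
  define Dal where "Dal = qp al q i"
  define Dep where "Dep = qp ep q i"
  define DA2 where "DA2 = qp (A*q^(M+2)) q i"
  define f1 where "f1 = 1-q*y"
  define f2 where "f2 = 1-al*y"
  define f3 where "f3 = 1-ep*y"
  define g where "g = 1 - A*q^2*x*y"
  define h where "h = 1 - A*q*x"
  define e1 where "e1 = 1 - al*x"
  define e2 where "e2 = 1 - ep*x"
  define PP where "PP = PA*PD*PE*P1*Z/(Dq*Dal*Dep*DA2) * ((1-D*y)*(1-E*y)*w)"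
  have x0: "x \<noteq> 0" using nz by (simp add: x_def)
  have nzi: "Dq \<noteq> 0" "Dal \<noteq> 0" "Dep \<noteq> 0" "DA2 \<noteq> 0" "f1 \<noteq> 0" "f2 \<noteq> 0" "f3 \<noteq> 0" "g \<noteq> 0"
    using nzm by (auto simp: Suc Dq_def Dal_def Dep_def DA2_def f1_def f2_def f3_def g_def x_def y_def qp_Suc power_add mult_ac power2_eq_square)
  have nzM': "h \<noteq> 0" "e1 \<noteq> 0" "e2 \<noteq> 0" using nzM by (auto simp: h_def e1_def e2_def x_def mult_ac)
  have c: "qp q q (Suc i) = Dq * f1" "qp al q (Suc i) = Dal * f2" "qp ep q (Suc i) = Dep * f3"
    "qp D q (Suc i) = PD * (1-D*y)" "qp E q (Suc i) = PE * (1-E*y)"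
    unfolding qp_Suc Dq_def Dal_def Dep_def PD_def PE_def y_def f1_def f2_def f3_def by (simp_all add: mult_ac)
  have T1: "f6T q A D E al ep (Suc M) m = PP * ((1-A*q^2*y^2)*(1-1/(q*x))/(f1*f2*f3*g)*(q*y))"
  proof -
    have a0: "1 - A*q^(2*Suc i) = 1 - A*q^2*y^2" by (simp add: y_def power_mult_distrib power_mult power2_eq_square mult_ac)
    have a1: "qp A q (Suc i) = (1-A) * PA" unfolding qp_Suc2 PA_def ..
    have a2: "qp (1/q^(Suc M)) q (Suc i) = (1 - 1/(q*x)) * P1"
      unfolding qp_Suc2 P1_def x_def using nz by (simp add: field_simps)
    have a3: "qp (A*q^(Suc M+1)) q (Suc i) = DA2 * g"
      unfolding qp_Suc DA2_def g_def x_def y_def by (simp add: power_add mult_ac power2_eq_square)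
    have a4': "A*q^(Suc M+1)/(D*E) = q*w" unfolding w_def x_def by (simp add: mult_ac)
    have a4: "(A*q^(Suc M+1)/(D*E))^(Suc i) = (q*y)*w*Z"
      unfolding a4' Z_def y_def by (simp add: power_mult_distrib mult_ac)
    show ?thesis unfolding f6T_def Suc a0 a1 a2 a3 a4 c PP_def using nzi nz x0
      by (simp add: field_simps)
  qed
  have T2: "f6T q A D E al ep M m = PP * ((1-A*q^2*y^2)*(1-y/x)/(f1*f2*f3*h))"
  proof -
    have a0: "1 - A*q^(2*Suc i) = 1 - A*q^2*y^2" by (simp add: y_def power_mult_distrib power_mult power2_eq_square mult_ac)
    have a1: "qp A q (Suc i) = (1-A) * PA" unfolding qp_Suc2 PA_def ..
    have a2: "qp (1/q^M) q (Suc i) = P1 * (1 - y/x)"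
      unfolding qp_Suc P1_def x_def y_def using nz by (simp add: field_simps)
    have a3: "qp (A*q^(M+1)) q (Suc i) = h * DA2"
      unfolding qp_Suc2 DA2_def h_def x_def by (simp add: power_add mult_ac numeral_2_eq_2)
    have a4: "(A*q^(M+1)/(D*E))^(Suc i) = w*Z"
      unfolding w_def Z_def x_def by (simp add: mult_ac)
    show ?thesis unfolding f6T_def Suc a0 a1 a2 a3 a4 c PP_def using nzi nz x0 nzM'
      by (simp add: field_simps)
  qed
  have H2: "f6H q A D E al ep M (Suc m) = PP * ((1-A*q*y)*(1-D*q*y)*(1-E*q*y)*(1-y/x)/(e1*e2*f1*f2*f3*g)*w)"
  proof -
    have hh: "f6H q A D E al ep M (Suc m) = qp (A*q) q (Suc i) * qp D q (Suc (Suc i)) * qp E q (Suc (Suc i)) * qp (1/q^M) q (Suc i)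
     / (e1*e2 * qp q q (Suc i) * qp al q (Suc i) * qp ep q (Suc i) * qp (A*q^(M+2)) q (Suc i))
     * (A*q*x/(D*E))^(Suc (Suc i))" unfolding f6H_def Suc e1_def e2_def x_def by (simp add: mult_ac)
    have a1: "qp (A*q) q (Suc i) = PA * (1 - A*q*y)" unfolding qp_Suc PA_def y_def by (simp add: mult_ac)
    have a2: "qp (1/q^M) q (Suc i) = P1 * (1 - y/x)"
      unfolding qp_Suc P1_def x_def y_def using nz by (simp add: field_simps)
    have a3: "qp (A*q^(M+2)) q (Suc i) = DA2 * g"
      unfolding qp_Suc DA2_def g_def x_def y_def by (simp add: power_add mult_ac power2_eq_square)
    have a4: "(A*q*x/(D*E))^(Suc (Suc i)) = w*w*Z"
      unfolding w_def Z_def by (simp add: mult_ac)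
    have a5: "qp D q (Suc (Suc i)) = PD * (1-D*y) * (1-D*q*y)" "qp E q (Suc (Suc i)) = PE * (1-E*y) * (1-E*q*y)"
      unfolding qp_Suc[of _ _ "Suc i"] c y_def by (simp_all add: mult_ac)
    show ?thesis unfolding hh a1 a2 a3 a4 a5 c PP_def using nzi nz x0 nzM'
      by (simp add: field_simps)
  qed
  have H1: "f6H q A D E al ep M m = PP * (1/(e1*e2))"
  proof -
    have hh: "f6H q A D E al ep M m = PA * qp D q (Suc i) * qp E q (Suc i) * P1
     / (e1*e2 * Dq * Dal * Dep * DA2) * (A*q*x/(D*E))^(Suc i)"
      unfolding f6H_def Suc PA_def P1_def Dq_def Dal_def Dep_def DA2_def x_def e1_def e2_def by (simp add: mult_ac)
    have a4: "(A*q*x/(D*E))^(Suc i) = w*Z"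
      unfolding w_def Z_def by (simp add: mult_ac)
    show ?thesis unfolding hh a4 c PP_def using nzi nz x0 nzM'
      by (simp add: field_simps)
  qed
  have K: "(1-A*q^2*y^2)*(1-1/(q*x))/(f1*f2*f3*g)*(q*y)
     - h*(1-w)/(e1*e2) * ((1-A*q^2*y^2)*(1-y/x)/(f1*f2*f3*h))
     = (1-A*q*y)*(1-D*q*y)*(1-E*q*y)*(1-y/x)/(e1*e2*f1*f2*f3*g)*w - 1/(e1*e2)"
    by (rule key6[OF nz(1) x0 nz(2,3) nzi(5-8) nzM' dd w_def f1_def f2_def f3_def g_def h_def e1_def e2_def])
  have rho: "(1 - A*q^(M+1))*(1 - A*q^(M+1)/(D*E))/((1-al*q^M)*(1-ep*q^M)) = h*(1-w)/(e1*e2)"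
    unfolding w_def x_def h_def e1_def e2_def by (simp add: mult_ac)
  show ?thesis unfolding T1 T2 H1 H2 rho
    by (rule lin_comb2[OF K])
qed


lemma qp_nz_A: "(\<And>i. A*q^Suc i \<noteq> 1) \<Longrightarrow> qp (A*q^(Suc k)) q m \<noteq> 0"
  unfolding qp_def by (auto simp: power_add[symmetric] mult.assoc)

lemma sum6:
  fixes q A D E al ep :: complex
  assumes nz: "q \<noteq> 0" "D \<noteq> 0" "E \<noteq> 0" "1 - A \<noteq> 0"
  assumes dd: "al = A*q/D" "ep = A*q/E"
  assumes nA: "\<And>i. A*q^Suc i \<noteq> 1"
  shows "qp q q M \<noteq> 0 \<Longrightarrow> qp al q M \<noteq> 0 \<Longrightarrow> qp ep q M \<noteq> 0 \<Longrightarrow>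
    (\<Sum>m\<le>M. f6T q A D E al ep M m) = qp (A*q) q M * qp (A*q/(D*E)) q M / (qp al q M * qp ep q M)"
proof (induction M)
  case 0
  then show ?case using nz(4) by (simp add: f6T_def)
next
  case (Suc M)
  have nk: "qp q q M \<noteq> 0" "qp al q M \<noteq> 0" "qp ep q M \<noteq> 0"
    using Suc.prems qp_nz_le[of M "Suc M"] by auto
  have e: "1 - al*q^M \<noteq> 0" "1 - ep*q^M \<noteq> 0" using Suc.prems by (auto simp: qp_Suc)
  have hA: "1 - A*q^(M+1) \<noteq> 0" using nA[of M] by simp
  define \<rho> where "\<rho> = (1 - A*q^(M+1))*(1 - A*q^(M+1)/(D*E))/((1-al*q^M)*(1-ep*q^M))"
  have st: "f6T q A D E al ep (Suc M) m = \<rho> * f6T q A D E al ep M m + (f6H q A D E al ep M (Suc m) - f6H q A D E al ep M m)"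
    if "m \<le> Suc M" for m
  proof -
    have "qp q q m \<noteq> 0" "qp al q m \<noteq> 0" "qp ep q m \<noteq> 0"
      using Suc.prems qp_nz_le[OF that] by auto
    moreover have "qp (A*q^(M+2)) q m \<noteq> 0" using qp_nz_A[OF nA, of "Suc M" m] by simp
    ultimately have "f6T q A D E al ep (Suc M) m - \<rho> * f6T q A D E al ep M m = f6H q A D E al ep M (Suc m) - f6H q A D E al ep M m"
      unfolding \<rho>_def by (rule s6_step[OF nz dd _ _ _ _ hA e])
    then show ?thesis by (simp add: algebra_simps)
  qed
  have "(\<Sum>m\<le>Suc M. f6T q A D E al ep (Suc M) m)
      = (\<Sum>m\<le>Suc M. \<rho> * f6T q A D E al ep M m + (f6H q A D E al ep M (Suc m) - f6H q A D E al ep M m))"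
    by (rule sum.cong) (auto simp: st)
  also have "... = \<rho> * (\<Sum>m\<le>Suc M. f6T q A D E al ep M m) + (f6H q A D E al ep M (Suc (Suc M)) - f6H q A D E al ep M 0)"
    by (simp only: sum.distrib sum_distrib_left telesc)
  also have "f6H q A D E al ep M (Suc (Suc M)) = 0"
    using qp_inv_zero[OF nz(1), of M "Suc M"] by (simp add: f6H_def)
  also have "f6H q A D E al ep M 0 = 0" by (simp add: f6H_def)
  also have "f6T q A D E al ep M (Suc M) = 0"
    using qp_inv_zero[OF nz(1), of M "Suc M"] by (simp add: f6T_def)
  hence "(\<Sum>m\<le>Suc M. f6T q A D E al ep M m) = (\<Sum>m\<le>M. f6T q A D E al ep M m)" by simp
  also have "... = qp (A*q) q M * qp (A*q/(D*E)) q M / (qp al q M * qp ep q M)" using Suc.IH nk by simp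
  finally show ?case unfolding \<rho>_def using nk e nz by (simp add: qp_Suc field_simps)
qed


definition tq :: "complex \<Rightarrow> nat \<Rightarrow> complex" where "tq q j = (\<Prod>t<j. q^Suc t)"

lemma tq_Suc: "tq q (Suc j) = tq q j * q^Suc j" by (simp add: tq_def)
lemma tq_nz: "q \<noteq> 0 \<Longrightarrow> tq q j \<noteq> 0" by (simp add: tq_def)

lemma L1: "q \<noteq> 0 \<Longrightarrow> qp (1/q^(j+m)) q j = (-1)^j / (q^(j*m) * tq q j) * qp (q^(m+1)) q j"
proof (induction j)
  case 0 then show ?case by (simp add: tq_def)
next
  case (Suc j)
  have a: "qp (1/q^(Suc j+m)) q (Suc j) = (1 - 1/q^(Suc j + m)) * qp (1/q^(j+m)) q j"
    unfolding qp_Suc2 using Suc.prems by (simp add: field_simps)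
  have b: "qp (q^(m+1)) q (Suc j) = qp (q^(m+1)) q j * (1 - q^(m+1+j))"
    unfolding qp_Suc by (simp add: power_add)
  show ?case unfolding a b Suc.IH[OF Suc.prems] tq_Suc using Suc.prems tq_nz[OF Suc.prems, of j]
    by (simp add: field_simps power_add power_mult_distrib algebra_simps)
qed

lemma L3: "q \<noteq> 0 \<Longrightarrow> l \<noteq> 0 \<Longrightarrow> d \<noteq> 0 \<Longrightarrow> e \<noteq> 0 \<Longrightarrow>
  qp (l*q/(d*e)) q M * (l*q^(j+M+1)/(d*e))^j * (-1)^j * qp (d*e/(l*q^(j+M))) q j = qp (l*q/(d*e)) q (j+M) * tq q j"
proof (induction j)
  case 0 then show ?case by (simp add: tq_def)
next
  case (Suc j)
  have a: "qp (d*e/(l*q^(Suc j+M))) q (Suc j) = (1 - d*e/(l*q^(Suc j+M))) * qp (d*e/(l*q^(j+M))) q j"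
    unfolding qp_Suc2 using Suc.prems by (simp add: field_simps)
  have b: "(l*q^(Suc j+M+1)/(d*e))^(Suc j) = (l*q^(j+M+1)/(d*e))^j * q^j * (l*q^(j+M+2)/(d*e))"
    by (simp add: power_mult_distrib power_add field_simps)
  have "qp (l*q/(d*e)) q M * (l*q^(Suc j+M+1)/(d*e))^(Suc j) * (-1)^(Suc j) * qp (d*e/(l*q^(Suc j+M))) q (Suc j)
     = (qp (l*q/(d*e)) q M * (l*q^(j+M+1)/(d*e))^j * (-1)^j * qp (d*e/(l*q^(j+M))) q j) * (q^j * (- (l*q^(j+M+2)/(d*e)) * (1 - d*e/(l*q^(Suc j+M)))))"
    unfolding a b by (simp add: algebra_simps)
  also have "... = qp (l*q/(d*e)) q (j+M) * tq q j * (q^j * (- (l*q^(j+M+2)/(d*e)) * (1 - d*e/(l*q^(Suc j+M)))))"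
    using Suc by simp
  also have "... = qp (l*q/(d*e)) q (Suc j+M) * tq q (Suc j)"
    unfolding tq_Suc using Suc.prems by (simp add: qp_Suc field_simps power_add)
  finally show ?case .
qed


definition wV where
 "wV q l d e N k = (1 - l*q^(2*k))/(1-l) * (qp l q k * qp d q k * qp e q k * qp (1/q^N) q k)
    / (qp q q k * qp (l*q/d) q k * qp (l*q/e) q k * qp (l*q^(N+1)) q k) * (l*q^(N+1)/(d*e))^k"

definition wK where
 "wK q l d e N j = qp (l*q) q (2*j) * qp d q j * qp e q j * qp (1/q^N) q j
    / (qp (l*q/d) q j * qp (l*q/e) q j * qp (l*q^(N+1)) q j) * (l*q^(N+1)/(d*e))^j * (-1)^j / tq q j"

lemma PT:
  fixes q l d e bt gm dl :: complex
  assumes nz: "q \<noteq> 0" "d \<noteq> 0" "e \<noteq> 0" "1 - l \<noteq> 0" "1 - l*q^(2*j) \<noteq> 0"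
  assumes nq: "qp q q m \<noteq> 0" "qp (q^(m+1)) q j \<noteq> 0" "qp q q j \<noteq> 0" "qp bt q j \<noteq> 0" "qp gm q j \<noteq> 0"
     "qp (l*q/d) q j \<noteq> 0" "qp (l*q/e) q j \<noteq> 0" "qp (l*q^(j+1)/d) q m \<noteq> 0" "qp (l*q^(j+1)/e) q m \<noteq> 0"
     "qp (l*q^(j+M+1)) q j \<noteq> 0" "qp (l*q^(2*j)*q^(M+1)) q m \<noteq> 0"
  shows "wV q l d e (j+M) (j+m) * sT q l bt gm dl (j+m) j
     = (qp dl q j / (qp q q j * qp bt q j * qp gm q j) * q^j) * wK q l d e (j+M) j
       * f6T q (l*q^(2*j)) (d*q^j) (e*q^j) (l*q^(j+1)/d) (l*q^(j+1)/e) M m"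
proof -
  have tz: "tq q j \<noteq> 0" using tq_nz[OF nz(1)] .
  have s1: "qp l q (j+m) * qp (l*q^(j+m)) q j = qp l q (2*j) * qp (l*q^(2*j)) q m"
  proof -
    have e: "(j+m)+j = 2*j+m" by simp
    show ?thesis using qp_add[of l q "j+m" j] qp_add[of l q "2*j" m] unfolding e by metis
  qed
  have s1': "qp (l*q) q (2*j) = qp l q (2*j) * (1 - l*q^(2*j))/(1-l)"
  proof -
    have "(1-l) * qp (l*q) q (2*j) = qp l q (2*j) * (1 - l*q^(2*j))" using qp_Suc qp_Suc2 by metis
    then show ?thesis using nz(4) by (simp add: field_simps)
  qed
  have s2: "qp d q (j+m) = qp d q j * qp (d*q^j) q m" "qp e q (j+m) = qp e q j * qp (e*q^j) q m"
    by (rule qp_add)+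
  have s3: "qp (1/q^(j+M)) q (j+m) = qp (1/q^(j+M)) q j * qp (1/q^M) q m"
    using qp_add[of "1/q^(j+M)" q j m] nz(1) by (simp add: power_add)
  have s4: "qp q q (j+m) = qp q q m * qp (q^(m+1)) q j"
    using qp_add[of q q m j] by (simp add: add.commute mult.commute)
  have s5: "qp (1/q^(j+m)) q j = (-1)^j / (q^(j*m) * tq q j) * qp (q^(m+1)) q j"
    by (rule L1[OF nz(1)])
  have s6: "qp (l*q/d) q (j+m) = qp (l*q/d) q j * qp (l*q^(j+1)/d) q m"
           "qp (l*q/e) q (j+m) = qp (l*q/e) q j * qp (l*q^(j+1)/e) q m"
    using qp_add[of "l*q/d" q j m] qp_add[of "l*q/e" q j m] by (simp_all add: mult_ac)
  have s7: "qp (l*q^(j+M+1)) q (j+m) = qp (l*q^(j+M+1)) q j * qp (l*q^(2*j)*q^(M+1)) q m"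
    using qp_add[of "l*q^(j+M+1)" q j m] by (simp add: power_add mult_ac mult_2 mult_2_right)
  have s8: "(l*q^(j+M+1)/(d*e))^(j+m) = (l*q^(j+M+1)/(d*e))^j * (l*q^(2*j)*q^(M+1)/(d*q^j*(e*q^j)))^m * q^(j*m)"
  proof -
    define X where "X = l*q^(j+M+1)/(d*e)"
    define u where "u = l*q^(2*j)*q^(M+1)/(d*q^j*(e*q^j))"
    have h: "X = u * q^j"
      unfolding X_def u_def using nz by (simp add: field_simps power_add mult_2 mult_2_right)
    have "X^(j+m) = X^j * X^m" by (simp add: power_add)
    also have "X^m = u^m * q^(j*m)" unfolding h by (simp add: power_mult_distrib power_mult)
    finally show ?thesis unfolding X_def u_def by simp
  qed
  have s9: "1 - l*q^(2*(j+m)) = 1 - l*q^(2*j)*q^(2*m)" by (simp add: power_add mult_ac)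
  have s10: "l*q^(2*j)*q/(d*q^j) = l*q^(j+1)/d" "l*q^(2*j)*q/(e*q^j) = l*q^(j+1)/e"
    using nz by (simp_all add: field_simps power_add mult_2 mult_2_right)
  have lhs: "wV q l d e (j+M) (j+m) * sT q l bt gm dl (j+m) j
     = (1 - l*q^(2*j)*q^(2*m))/(1-l) * ((qp l q (2*j) * qp (l*q^(2*j)) q m) * (qp d q j * qp (d*q^j) q m) * (qp e q j * qp (e*q^j) q m)
        * (qp (1/q^(j+M)) q j * qp (1/q^M) q m))
       / ((qp q q m * qp (q^(m+1)) q j) * (qp (l*q/d) q j * qp (l*q^(j+1)/d) q m) * (qp (l*q/e) q j * qp (l*q^(j+1)/e) q m)
        * (qp (l*q^(j+M+1)) q j * qp (l*q^(2*j)*q^(M+1)) q m))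
       * ((l*q^(j+M+1)/(d*e))^j * (l*q^(2*j)*q^(M+1)/(d*q^j*(e*q^j)))^m * q^(j*m))
       * ((-1)^j / (q^(j*m) * tq q j) * qp (q^(m+1)) q j) * qp dl q j / (qp q q j * qp bt q j * qp gm q j) * q^j"
    unfolding wV_def sT_def s1[symmetric] s2 s3 s4 s5[symmetric] s6 s7 s8[symmetric] s9[symmetric]
    by (simp add: mult_ac add.commute)
  define Xj where "Xj = (l*q^(j+M+1)/(d*e))^j"
  define Um where "Um = (l*q^(2*j)*q^(M+1)/(d*q^j*(e*q^j)))^m"
  define Qjm where "Qjm = q^(j*m)"
  define Am where "Am = 1 - l*q^(2*j)*q^(2*m)"
  define A1 where "A1 = 1 - l*q^(2*j)"
  define QJ where "QJ = q^j"
  have qz: "Qjm \<noteq> 0" "QJ \<noteq> 0" using nz by (simp_all add: Qjm_def QJ_def)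
  have a1: "A1 \<noteq> 0" using nz by (simp add: A1_def)
  have s1'': "qp (l*q) q (2*j) = qp l q (2*j) * A1/(1-l)" unfolding s1' A1_def ..
  show ?thesis unfolding lhs wK_def f6T_def s1'' s10
    unfolding Xj_def[symmetric] Um_def[symmetric] Qjm_def[symmetric] Am_def[symmetric] A1_def[symmetric]
    using nz(4) nq tz qz a1
    by (simp add: field_simps)
qed


lemma FC:
  fixes q l d e :: complex
  assumes nz: "q \<noteq> 0" "l \<noteq> 0" "d \<noteq> 0" "e \<noteq> 0"
  assumes nq: "qp (l*q/d) q (j+M) \<noteq> 0" "qp (l*q/e) q (j+M) \<noteq> 0" "qp (l*q^(j+M+1)) q j \<noteq> 0"
     "qp (d*e/(l*q^(j+M))) q j \<noteq> 0"
  shows "wK q l d e (j+M) j * (qp (l*q^(2*j)*q) q M * qp (l*q^(2*j)*q/(d*q^j*(e*q^j))) q M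
            / (qp (l*q^(j+1)/d) q M * qp (l*q^(j+1)/e) q M))
       = qp (l*q) q (j+M) * qp (l*q/(d*e)) q (j+M) / (qp (l*q/d) q (j+M) * qp (l*q/e) q (j+M))
         * (qp (1/q^(j+M)) q j * qp d q j * qp e q j / qp (d*e/(l*q^(j+M))) q j)"
proof -
  define G where "G = (l*q^(j+M+1)/(d*e))^j"
  define Qd where "Qd = qp (d*e/(l*q^(j+M))) q j"
  have tz: "tq q j \<noteq> 0" using tq_nz[OF nz(1)] .
  have F1: "qp (l*q) q (2*j) * qp (l*q^(2*j)*q) q M = qp (l*q) q (j+M) * qp (l*q^(j+M+1)) q j"
  proof -
    have e1: "qp (l*q) q (2*j+M) = qp (l*q) q (2*j) * qp (l*q^(2*j)*q) q M"
      using qp_add[of "l*q" q "2*j" M] by (simp add: mult_ac)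
    have e2: "qp (l*q) q ((j+M)+j) = qp (l*q) q (j+M) * qp (l*q^(j+M+1)) q j"
      using qp_add[of "l*q" q "j+M" j] by (simp add: mult_ac)
    have "2*j+M = (j+M)+j" by simp
    then show ?thesis using e1 e2 by metis
  qed
  have F2: "qp (l*q/d) q j * qp (l*q^(j+1)/d) q M = qp (l*q/d) q (j+M)"
           "qp (l*q/e) q j * qp (l*q^(j+1)/e) q M = qp (l*q/e) q (j+M)"
    using qp_add[of "l*q/d" q j M] qp_add[of "l*q/e" q j M] by (simp_all add: mult_ac)
  have F3: "l*q^(2*j)*q/(d*q^j*(e*q^j)) = l*q/(d*e)"
    using nz by (simp add: field_simps power_add mult_2 mult_2_right)
  have F4: "qp (l*q/(d*e)) q M * G * (-1)^j = qp (l*q/(d*e)) q (j+M) * tq q j / Qd"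
  proof -
    have "qp (l*q/(d*e)) q M * G * (-1)^j * Qd = qp (l*q/(d*e)) q (j+M) * tq q j"
      unfolding G_def Qd_def by (rule L3[OF nz(1,2,3,4)])
    then show ?thesis using nq(4) unfolding Qd_def[symmetric] by (simp add: field_simps)
  qed
  have nq2: "qp (l*q/d) q j \<noteq> 0" "qp (l*q^(j+1)/d) q M \<noteq> 0" "qp (l*q/e) q j \<noteq> 0" "qp (l*q^(j+1)/e) q M \<noteq> 0"
    using nq(1,2) F2 by (metis mult_eq_0_iff)+
  have "wK q l d e (j+M) j * (qp (l*q^(2*j)*q) q M * qp (l*q^(2*j)*q/(d*q^j*(e*q^j))) q M
            / (qp (l*q^(j+1)/d) q M * qp (l*q^(j+1)/e) q M))
     = (qp (l*q) q (2*j) * qp (l*q^(2*j)*q) q M) * qp d q j * qp e q j * qp (1/q^(j+M)) q j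
        * (qp (l*q/(d*e)) q M * G * (-1)^j)
        / (tq q j * (qp (l*q/d) q j * qp (l*q^(j+1)/d) q M) * (qp (l*q/e) q j * qp (l*q^(j+1)/e) q M) * qp (l*q^(j+M+1)) q j)"
    unfolding wK_def F3 G_def[symmetric] using nq nq2 tz by (simp add: field_simps)
  also have "... = qp (l*q) q (j+M) * qp (l*q/(d*e)) q (j+M) / (qp (l*q/d) q (j+M) * qp (l*q/e) q (j+M))
         * (qp (1/q^(j+M)) q j * qp d q j * qp e q j / Qd)"
    unfolding F1 F2 F4 using nq nq2 tz by (simp add: field_simps)
  finally show ?thesis unfolding Qd_def .
qed


lemma qp_nz_one: "(\<And>i. q^Suc i \<noteq> 1) \<Longrightarrow> qp (q^(Suc k)) q m \<noteq> 0"
  using qp_nz_A[of 1 q k m] by simp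

lemma sum_shift_from:
  fixes g :: "nat \<Rightarrow> complex"
  assumes "\<And>k. k < j \<Longrightarrow> g k = 0"
  shows "(\<Sum>k\<le>j+M. g k) = (\<Sum>m\<le>M. g (j+m))"
proof -
  have "(\<Sum>k\<le>j+M. g k) = (\<Sum>k\<in>{j..j+M}. g k)"
    by (rule sum.mono_neutral_right) (auto simp: assms)
  also have "{j..j+M} = {0+j..M+j}" by simp
  also have "(\<Sum>k\<in>{0+j..M+j}. g k) = (\<Sum>m\<in>{0..M}. g (m+j))" by (rule sum.shift_bounds_cl_nat_ivl)
  finally show ?thesis by (simp add: atLeast0AtMost add.commute)
qed

lemma watson:
  fixes q l b c d e :: complex and N :: nat
  assumes nz: "q \<noteq> 0" "l \<noteq> 0" "b \<noteq> 0" "c \<noteq> 0" "d \<noteq> 0" "e \<noteq> 0" "1 - l \<noteq> 0"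
  assumes hq: "\<And>i. q^Suc i \<noteq> 1" and hl: "\<And>i. l*q^Suc i \<noteq> 1"
  assumes nN: "qp (l*q/b) q N \<noteq> 0" "qp (l*q/c) q N \<noteq> 0" "qp (l*q/d) q N \<noteq> 0" "qp (l*q/e) q N \<noteq> 0"
     "qp (d*e/(l*q^N)) q N \<noteq> 0"
  shows "(\<Sum>k\<le>N. (1 - l*q^(2*k))/(1-l) * (qp l q k * qp b q k * qp c q k * qp d q k * qp e q k * qp (1/q^N) q k)
      / (qp q q k * qp (l*q/b) q k * qp (l*q/c) q k * qp (l*q/d) q k * qp (l*q/e) q k * qp (l*q^(N+1)) q k)
      * (l^2*q^(N+2)/(b*c*d*e))^k)
   = qp (l*q) q N * qp (l*q/(d*e)) q N / (qp (l*q/d) q N * qp (l*q/e) q N)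
     * (\<Sum>j\<le>N. qp (1/q^N) q j * qp d q j * qp e q j * qp (l*q/(b*c)) q j
        / (qp q q j * qp (l*q/b) q j * qp (l*q/c) q j * qp (d*e/(l*q^N)) q j) * q^j)"
proof -
  define bt where "bt = l*q/b"
  define gm where "gm = l*q/c"
  define dl where "dl = l*q/(b*c)"
  have qq: "qp q q n \<noteq> 0" for n using qp_nz_one[OF hq, of 0 n] by simp
  have S1: "(1 - l*q^(2*k))/(1-l) * (qp l q k * qp b q k * qp c q k * qp d q k * qp e q k * qp (1/q^N) q k)
      / (qp q q k * qp (l*q/b) q k * qp (l*q/c) q k * qp (l*q/d) q k * qp (l*q/e) q k * qp (l*q^(N+1)) q k)
      * (l^2*q^(N+2)/(b*c*d*e))^k = wV q l d e N k * (\<Sum>j\<le>N. sT q l bt gm dl k j)" if "k \<le> N" for k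
  proof -
    have nb: "qp bt q k \<noteq> 0" "qp gm q k \<noteq> 0" using nN qp_nz_le[OF that] by (auto simp: bt_def gm_def)
    have "(\<Sum>j\<le>N. sT q l bt gm dl k j) = (\<Sum>j\<le>k. sT q l bt gm dl k j)"
      by (rule sum.mono_neutral_right) (use that qp_inv_zero[OF nz(1)] in \<open>auto simp: sT_def\<close>)
    also have "... = qp b q k * qp c q k / (qp bt q k * qp gm q k) * dl^k"
      by (rule saal[OF nz(1,3,4) bt_def gm_def dl_def qq nb])
    finally have e1: "(\<Sum>j\<le>N. sT q l bt gm dl k j) = qp b q k * qp c q k / (qp bt q k * qp gm q k) * dl^k" .
    define P1 where "P1 = dl^k"
    define P2 where "P2 = (l*q^(N+1)/(d*e))^k"
    have pw: "(l^2*q^(N+2)/(b*c*d*e))^k = P1 * P2"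
    proof -
      have h: "l^2*q^(N+2)/(b*c*d*e) = dl * (l*q^(N+1)/(d*e))" unfolding dl_def using nz
        by (simp add: field_simps power2_eq_square)
      show ?thesis unfolding P1_def P2_def h by (rule power_mult_distrib)
    qed
    show ?thesis unfolding e1 wV_def pw P2_def[symmetric] P1_def[symmetric] bt_def[symmetric] gm_def[symmetric]
      using nb qq by (simp add: field_simps)
  qed
  have S4: "(\<Sum>k\<le>N. wV q l d e N k * sT q l bt gm dl k j)
     = qp dl q j / (qp q q j * qp bt q j * qp gm q j) * q^j *
       (qp (1/q^N) q j * qp d q j * qp e q j / qp (d*e/(l*q^N)) q j) *
       (qp (l*q) q N * qp (l*q/(d*e)) q N / (qp (l*q/d) q N * qp (l*q/e) q N))" if "j \<le> N" for j
  proof -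
    define M where "M = N - j"
    have NM: "N = j + M" using that by (simp add: M_def)
    have nbj: "qp bt q j \<noteq> 0" "qp gm q j \<noteq> 0" using nN qp_nz_le[OF that] by (auto simp: bt_def gm_def)
    have F2: "qp (l*q/d) q j * qp (l*q^(j+1)/d) q M = qp (l*q/d) q N"
             "qp (l*q/e) q j * qp (l*q^(j+1)/e) q M = qp (l*q/e) q N"
      using qp_add[of "l*q/d" q j M] qp_add[of "l*q/e" q j M] NM by (simp_all add: mult_ac)
    have nd: "qp (l*q/d) q j \<noteq> 0" "qp (l*q^(j+1)/d) q M \<noteq> 0" "qp (l*q/e) q j \<noteq> 0" "qp (l*q^(j+1)/e) q M \<noteq> 0"
      using nN(3,4) unfolding F2[symmetric] by auto
    have A1: "1 - l*q^(2*j) \<noteq> 0"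
    proof (cases j)
      case 0 then show ?thesis using nz(7) by simp
    next
      case (Suc i) then show ?thesis using hl[of "Suc (2*i)"] by (simp add: mult_2 power_add mult_ac)
    qed
    have hA: "l*q^(2*j)*q^Suc i \<noteq> 1" for i using hl[of "2*j+i"] by (simp add: power_add mult_ac)
    have e1: "(\<Sum>k\<le>N. wV q l d e N k * sT q l bt gm dl k j) = (\<Sum>m\<le>M. wV q l d e (j+M) (j+m) * sT q l bt gm dl (j+m) j)"
      unfolding NM by (rule sum_shift_from) (use qp_inv_zero[OF nz(1)] in \<open>auto simp: sT_def\<close>)
    have e2: "wV q l d e (j+M) (j+m) * sT q l bt gm dl (j+m) j
     = (qp dl q j / (qp q q j * qp bt q j * qp gm q j) * q^j) * wK q l d e (j+M) j
       * f6T q (l*q^(2*j)) (d*q^j) (e*q^j) (l*q^(j+1)/d) (l*q^(j+1)/e) M m" if "m \<le> M" for m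
    proof (rule PT[OF nz(1,5,6,7) A1 qq _ qq nbj])
      show "qp (q^(m+1)) q j \<noteq> 0" using qp_nz_one[OF hq, of m j] by simp
      show "qp (l*q/d) q j \<noteq> 0" "qp (l*q/e) q j \<noteq> 0" using nd by auto
      show "qp (l*q^(j+1)/d) q m \<noteq> 0" "qp (l*q^(j+1)/e) q m \<noteq> 0" using nd qp_nz_le[OF that] by auto
      show "qp (l*q^(j+M+1)) q j \<noteq> 0" using qp_nz_A[OF hl, of "j+M" j] by simp
      show "qp (l*q^(2*j)*q^(M+1)) q m \<noteq> 0" using qp_nz_A[of "l*q^(2*j)" q M m] hA by (simp add: mult_ac)
    qed
    have e3: "(\<Sum>m\<le>M. f6T q (l*q^(2*j)) (d*q^j) (e*q^j) (l*q^(j+1)/d) (l*q^(j+1)/e) M m)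
       = qp (l*q^(2*j)*q) q M * qp (l*q^(2*j)*q/(d*q^j*(e*q^j))) q M / (qp (l*q^(j+1)/d) q M * qp (l*q^(j+1)/e) q M)"
    proof (rule sum6)
      show "q \<noteq> 0" "d*q^j \<noteq> 0" "e*q^j \<noteq> 0" "1 - l*q^(2*j) \<noteq> 0" using nz A1 by auto
      show "l*q^(j+1)/d = l*q^(2*j)*q/(d*q^j)" "l*q^(j+1)/e = l*q^(2*j)*q/(e*q^j)"
        using nz by (simp_all add: field_simps power_add mult_2 mult_2_right)
      show "\<And>i. l*q^(2*j)*q^Suc i \<noteq> 1" by (rule hA)
      show "qp q q M \<noteq> 0" by (rule qq)
      show "qp (l*q^(j+1)/d) q M \<noteq> 0" "qp (l*q^(j+1)/e) q M \<noteq> 0" using nd by auto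
    qed
    have e4: "wK q l d e (j+M) j * (qp (l*q^(2*j)*q) q M * qp (l*q^(2*j)*q/(d*q^j*(e*q^j))) q M
            / (qp (l*q^(j+1)/d) q M * qp (l*q^(j+1)/e) q M))
       = qp (l*q) q (j+M) * qp (l*q/(d*e)) q (j+M) / (qp (l*q/d) q (j+M) * qp (l*q/e) q (j+M))
         * (qp (1/q^(j+M)) q j * qp d q j * qp e q j / qp (d*e/(l*q^(j+M))) q j)"
    proof (rule FC[OF nz(1,2,5,6)])
      show "qp (l*q/d) q (j+M) \<noteq> 0" "qp (l*q/e) q (j+M) \<noteq> 0" using nN NM by auto
      show "qp (l*q^(j+M+1)) q j \<noteq> 0" using qp_nz_A[OF hl, of "j+M" j] by simp
      show "qp (d*e/(l*q^(j+M))) q j \<noteq> 0" using nN(5) qp_nz_le[OF that] NM by auto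
    qed
    have "(\<Sum>k\<le>N. wV q l d e N k * sT q l bt gm dl k j)
      = (qp dl q j / (qp q q j * qp bt q j * qp gm q j) * q^j) * wK q l d e (j+M) j
        * (\<Sum>m\<le>M. f6T q (l*q^(2*j)) (d*q^j) (e*q^j) (l*q^(j+1)/d) (l*q^(j+1)/e) M m)"
      unfolding e1 sum_distrib_left by (rule sum.cong) (auto simp: e2)
    also have "... = (qp dl q j / (qp q q j * qp bt q j * qp gm q j) * q^j) *
       (wK q l d e (j+M) j * (qp (l*q^(2*j)*q) q M * qp (l*q^(2*j)*q/(d*q^j*(e*q^j))) q M
            / (qp (l*q^(j+1)/d) q M * qp (l*q^(j+1)/e) q M)))" unfolding e3 by (simp add: mult_ac)
    also have "... = qp dl q j / (qp q q j * qp bt q j * qp gm q j) * q^j *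
       (qp (1/q^N) q j * qp d q j * qp e q j / qp (d*e/(l*q^N)) q j) *
       (qp (l*q) q N * qp (l*q/(d*e)) q N / (qp (l*q/d) q N * qp (l*q/e) q N))"
      unfolding e4 NM by (simp add: mult_ac)
    finally show ?thesis .
  qed
  have "(\<Sum>k\<le>N. (1 - l*q^(2*k))/(1-l) * (qp l q k * qp b q k * qp c q k * qp d q k * qp e q k * qp (1/q^N) q k)
      / (qp q q k * qp (l*q/b) q k * qp (l*q/c) q k * qp (l*q/d) q k * qp (l*q/e) q k * qp (l*q^(N+1)) q k)
      * (l^2*q^(N+2)/(b*c*d*e))^k) = (\<Sum>k\<le>N. wV q l d e N k * (\<Sum>j\<le>N. sT q l bt gm dl k j))"
    apply (rule sum.cong[OF refl]) apply (rule S1) by simp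
  also have "... = (\<Sum>j\<le>N. \<Sum>k\<le>N. wV q l d e N k * sT q l bt gm dl k j)"
    unfolding sum_distrib_left by (rule sum.swap)
  also have "... = (\<Sum>j\<le>N. qp dl q j / (qp q q j * qp bt q j * qp gm q j) * q^j *
       (qp (1/q^N) q j * qp d q j * qp e q j / qp (d*e/(l*q^N)) q j) *
       (qp (l*q) q N * qp (l*q/(d*e)) q N / (qp (l*q/d) q N * qp (l*q/e) q N)))"
    apply (rule sum.cong[OF refl]) apply (rule S4) by simp
  also have "... = qp (l*q) q N * qp (l*q/(d*e)) q N / (qp (l*q/d) q N * qp (l*q/e) q N)
     * (\<Sum>j\<le>N. qp (1/q^N) q j * qp d q j * qp e q j * qp (l*q/(b*c)) q j
        / (qp q q j * qp (l*q/b) q j * qp (l*q/c) q j * qp (d*e/(l*q^N)) q j) * q^j)"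
    unfolding sum_distrib_left bt_def gm_def dl_def by (rule sum.cong[OF refl]) (simp add: field_simps)
  finally show ?thesis .
qed


lemma watson_q:
  fixes q u g1 g2 g3 g4 :: complex and N :: nat
  assumes nz: "q \<noteq> 0" "g1 \<noteq> 0" "g2 \<noteq> 0" "g3 \<noteq> 0" "g4 \<noteq> 0"
  assumes hq: "\<And>i. q^Suc i \<noteq> 1"
  assumes nN: "qp (g1*q) q N \<noteq> 0" "qp (g2*q) q N \<noteq> 0" "qp (g3*q) q N \<noteq> 0" "qp (g4*q) q N \<noteq> 0"
     "qp (q/(g3*g4*q^N)) q N \<noteq> 0"
  shows "(\<Sum>k\<le>N. (1 - q^(2*k+1)) * (qp (1/q^N) q k * qp (q/g1) q k * qp (q/g2) q k * qp (q/g3) q k * qp (q/g4) q k)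
      / (qp (q^(N+2)) q k * qp (g1*q) q k * qp (g2*q) q k * qp (g3*q) q k * qp (g4*q) q k)
      * (q^N*g1*g2*g3*g4)^k)
   = (1-q) * (qp (q^2) q N * qp (g3*g4) q N / (qp (g3*q) q N * qp (g4*q) q N))
     * (\<Sum>j\<le>N. qp (1/q^N) q j * qp (q/g3) q j * qp (q/g4) q j * qp (g1*g2) q j
        / (qp q q j * qp (g1*q) q j * qp (g2*q) q j * qp (q/(g3*g4*q^N)) q j) * q^j)"
proof -
  have q1: "1 - q \<noteq> 0" using hq[of 0] by auto
  have hl: "\<And>i. q*q^Suc i \<noteq> 1" using hq by (metis power_Suc)
  have qq: "qp q q n \<noteq> 0" for n using qp_nz_one[OF hq, of 0 n] by simp
  have r1: "q*q/(q/g) = g*q" if "g \<noteq> 0" for g using that nz(1) by (simp add: field_simps power2_eq_square)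
  have r2: "q/g3*(q/g4)/(q*q^N) = q/(g3*g4*q^N)" using nz by (simp add: field_simps)
  have r3: "q*q/(q/g3*(q/g4)) = g3*g4" using nz by (simp add: field_simps)
  have r4: "q*q/(q/g1*(q/g2)) = g1*g2" using nz by (simp add: field_simps)
  have W: "(\<Sum>k\<le>N. (1 - q*q^(2*k))/(1-q) * (qp q q k * qp (q/g1) q k * qp (q/g2) q k * qp (q/g3) q k * qp (q/g4) q k * qp (1/q^N) q k)
      / (qp q q k * qp (q*q/(q/g1)) q k * qp (q*q/(q/g2)) q k * qp (q*q/(q/g3)) q k * qp (q*q/(q/g4)) q k * qp (q*q^(N+1)) q k)
      * (q^2*q^(N+2)/((q/g1)*(q/g2)*(q/g3)*(q/g4)))^k)
   = qp (q*q) q N * qp (q*q/((q/g3)*(q/g4))) q N / (qp (q*q/(q/g3)) q N * qp (q*q/(q/g4)) q N)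
     * (\<Sum>j\<le>N. qp (1/q^N) q j * qp (q/g3) q j * qp (q/g4) q j * qp (q*q/((q/g1)*(q/g2))) q j
        / (qp q q j * qp (q*q/(q/g1)) q j * qp (q*q/(q/g2)) q j * qp ((q/g3)*(q/g4)/(q*q^N)) q j) * q^j)"
    by (rule watson) (use nz q1 hq hl nN in \<open>simp_all add: r1 r2 mult_ac\<close>)
  have pw: "q^2*q^(N+2)/((q/g1)*(q/g2)*(q/g3)*(q/g4)) = q^N*g1*g2*g3*g4"
    using nz by (simp add: field_simps power_add power2_eq_square)
  have e2: "q*q^(N+1) = q^(N+2)" "q*q = q^2" by (simp_all add: power_add power2_eq_square)
  have T: "(1 - q^(2*k+1)) * (qp (1/q^N) q k * qp (q/g1) q k * qp (q/g2) q k * qp (q/g3) q k * qp (q/g4) q k)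
      / (qp (q^(N+2)) q k * qp (g1*q) q k * qp (g2*q) q k * qp (g3*q) q k * qp (g4*q) q k)
      * (q^N*g1*g2*g3*g4)^k
     = (1-q) * ((1 - q*q^(2*k))/(1-q) * (qp q q k * qp (q/g1) q k * qp (q/g2) q k * qp (q/g3) q k * qp (q/g4) q k * qp (1/q^N) q k)
      / (qp q q k * qp (q*q/(q/g1)) q k * qp (q*q/(q/g2)) q k * qp (q*q/(q/g3)) q k * qp (q*q/(q/g4)) q k * qp (q*q^(N+1)) q k)
      * (q^2*q^(N+2)/((q/g1)*(q/g2)*(q/g3)*(q/g4)))^k)" if kN: "k \<le> N" for k
  proof -
    have nk: "qp (g1*q) q k \<noteq> 0" "qp (g2*q) q k \<noteq> 0" "qp (g3*q) q k \<noteq> 0" "qp (g4*q) q k \<noteq> 0"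
      using nN qp_nz_le[OF kN] by auto
    have nk2: "qp (q^(N+2)) q k \<noteq> 0" using qp_nz_one[OF hq, of "N+1" k] by simp
    show ?thesis unfolding pw r1[OF nz(2)] r1[OF nz(3)] r1[OF nz(4)] r1[OF nz(5)] e2(1)
      using q1 qq nk nk2 by (simp add: field_simps)
  qed
  have LHS: "(\<Sum>k\<le>N. (1 - q^(2*k+1)) * (qp (1/q^N) q k * qp (q/g1) q k * qp (q/g2) q k * qp (q/g3) q k * qp (q/g4) q k)
      / (qp (q^(N+2)) q k * qp (g1*q) q k * qp (g2*q) q k * qp (g3*q) q k * qp (g4*q) q k)
      * (q^N*g1*g2*g3*g4)^k)
     = (1-q) * (\<Sum>k\<le>N. (1 - q*q^(2*k))/(1-q) * (qp q q k * qp (q/g1) q k * qp (q/g2) q k * qp (q/g3) q k * qp (q/g4) q k * qp (1/q^N) q k)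
      / (qp q q k * qp (q*q/(q/g1)) q k * qp (q*q/(q/g2)) q k * qp (q*q/(q/g3)) q k * qp (q*q/(q/g4)) q k * qp (q*q^(N+1)) q k)
      * (q^2*q^(N+2)/((q/g1)*(q/g2)*(q/g3)*(q/g4)))^k)"
    unfolding sum_distrib_left by (rule sum.cong[OF refl]) (rule T, simp)
  show ?thesis unfolding LHS unfolding W unfolding r1[OF nz(2)] r1[OF nz(3)] r1[OF nz(4)] r1[OF nz(5)] r2 r3 r4 unfolding e2
    by (simp add: mult_ac)
qed


lemma qpoch_nat: "qpoch x q (int n) = qp x q n"
  by (simp add: qpoch_def qp_def)

lemma qpoch_negSuc: "qpoch x q (- int (Suc n)) = inverse (\<Prod>j\<in>{1..Suc n}. 1 - x/q^j)"
proof -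
  have e: "(- int (Suc n) \<ge> 0) = False" by simp
  have f: "nat (- (- int (Suc n))) = Suc n" by simp
  show ?thesis unfolding qpoch_def e f if_False ..
qed

lemma NEG: "x \<noteq> 0 \<Longrightarrow> q \<noteq> 0 \<Longrightarrow> (\<Prod>j\<in>{1..m}. 1 - x/q^j) = (-x)^m / tq q m * qp (q/x) q m"
proof (induction m)
  case 0 then show ?case by (simp add: tq_def)
next
  case (Suc m)
  have "(\<Prod>j\<in>{1..Suc m}. 1 - x/q^j) = (\<Prod>j\<in>{1..m}. 1 - x/q^j) * (1 - x/q^Suc m)"
    by (simp add: prod.cl_ivl_Suc)
  also have "... = (-x)^m / tq q m * qp (q/x) q m * (1 - x/q^Suc m)" using Suc by simp
  also have "... = (-x)^Suc m / tq q (Suc m) * qp (q/x) q (Suc m)"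
    unfolding tq_Suc qp_Suc using Suc.prems tq_nz[OF Suc.prems(2), of m]
    by (simp add: field_simps)
  finally show ?case .
qed

lemma qp_conv:
  assumes "cmod q < 1"
  shows "convergent (\<lambda>n. qp x q n)"
proof -
  have "summable (\<lambda>i. norm ((1 - x*q^i) - 1))"
    using summable_mult[OF summable_geometric[of "cmod q"], of "cmod x"] assms
    by (simp add: norm_mult norm_power)
  hence "abs_convergent_prod (\<lambda>i. 1 - x*q^i)" by (rule summable_imp_abs_convergent_prod)
  hence "convergent_prod (\<lambda>i. 1 - x*q^i)" by (rule abs_convergent_prod_imp_convergent_prod)
  hence "convergent (\<lambda>n. \<Prod>i\<le>n. 1 - x*q^i)" by (rule convergent_prod_imp_convergent)
  hence "convergent (\<lambda>n. qp x q (Suc n))" by (simp add: qp_def lessThan_Suc_atMost)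
  thus ?thesis by (simp add: convergent_Suc_iff)
qed

lemma qinf_split:
  assumes "cmod q < 1"
  shows "qpoch_inf x q = qp x q m * qpoch_inf (x*q^m) q"
proof -
  have c: "(\<lambda>n. qp (x*q^m) q n) \<longlonglongrightarrow> qpoch_inf (x*q^m) q"
    using qp_conv[OF assms, of "x*q^m"] by (simp add: qpoch_inf_def qpoch_nat convergent_LIMSEQ_iff)
  have "(\<lambda>n. qp x q (n+m)) \<longlonglongrightarrow> qp x q m * qpoch_inf (x*q^m) q"
    unfolding add.commute[of _ m] qp_add by (intro tendsto_mult tendsto_const c)
  hence "(\<lambda>n. qp x q n) \<longlonglongrightarrow> qp x q m * qpoch_inf (x*q^m) q"
    by (rule LIMSEQ_offset)
  thus ?thesis by (simp add: qpoch_inf_def qpoch_nat limI)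
qed


definition FF where
 "FF q a b c d e k = (qpoch (q/a) q k * qpoch (q/b) q k * qpoch (q/c) q k * qpoch (q/d) q k * qpoch (q/e) q k)
            / (qpoch a q k * qpoch (b*q) q k * qpoch (c*q) q k * qpoch (d*q) q k * qpoch (e*q) q k)
            * (a*b*c*d*e) powi k"

lemma hp: "(-(y::complex))^(Suc n) = - ((-1)^n * (y * y^n))"
proof -
  have "(-(y::complex))^(Suc n) = (-y) * (-y)^n" by (rule power_Suc)
  also have "(-y)^n = (-1)^n * y^n" by (rule power_minus)
  finally show ?thesis by simp
qed

lemma piece_x:
  fixes q x T :: complex
  assumes "q \<noteq> 0" "x \<noteq> 0" "T \<noteq> 0" "qp x q (Suc n) \<noteq> 0"
  shows "inverse ((-(q/x))^(Suc n) / T * qp x q (Suc n)) * ((-(x*q))^(Suc n) / T * qp (1/x) q (Suc n))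
       = - x * x^n * x^n * qp (q/x) q n / qp (x*q) q n"
proof -
  define xn where "xn = x^n"
  define qn where "qn = q^n"
  define sg where "sg = ((-1)::complex)^n"
  have z: "xn \<noteq> 0" "qn \<noteq> 0" "sg \<noteq> 0" using assms by (simp_all add: xn_def qn_def sg_def)
  have a1: "(-(q/x))^(Suc n) = - (sg * (q/x * (qn/xn)))" unfolding hp sg_def qn_def xn_def by (simp add: power_divide)
  have a2: "(-(x*q))^(Suc n) = - (sg * (x*q * (xn*qn)))" unfolding hp sg_def qn_def xn_def by (simp add: power_mult_distrib)
  have s1: "qp x q (Suc n) = (1-x) * qp (x*q) q n" unfolding qp_Suc2 ..
  have s2: "qp (1/x) q (Suc n) = (1 - 1/x) * qp (q/x) q n" unfolding qp_Suc2 by simp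
  have nz2: "1 - x \<noteq> 0" "qp (x*q) q n \<noteq> 0" using assms(4) unfolding s1 by auto
  show ?thesis unfolding a1 a2 s1 s2 xn_def[symmetric] using assms(1-3) z nz2 by (simp add: field_simps)
qed

lemma piece_a:
  fixes q a T :: complex
  assumes "q \<noteq> 0" "a \<noteq> 0" "T \<noteq> 0" "qp a q (Suc n) \<noteq> 0"
  shows "inverse ((-(q/a))^(Suc n) / T * qp a q (Suc n)) * ((-a)^(Suc n) / T * qp (q/a) q (Suc n))
       = a * a * a^n * a^n / (q * q^n) * qp (q/a) q (Suc n) / qp a q (Suc n)"
proof -
  define an where "an = a^n"
  define qn where "qn = q^n"
  define sg where "sg = ((-1)::complex)^n"
  have z: "an \<noteq> 0" "qn \<noteq> 0" "sg \<noteq> 0" using assms by (simp_all add: an_def qn_def sg_def)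
  have a1: "(-(q/a))^(Suc n) = - (sg * (q/a * (qn/an)))" unfolding hp sg_def qn_def an_def by (simp add: power_divide)
  have a3: "(-a)^(Suc n) = - (sg * (a*an))" unfolding hp sg_def an_def ..
  show ?thesis unfolding a1 a3 an_def[symmetric] qn_def[symmetric] using assms z by (simp add: field_simps)
qed

lemma negterm:
  fixes q a b c d e :: complex and n :: nat
  assumes nz: "q \<noteq> 0" "a \<noteq> 0" "b \<noteq> 0" "c \<noteq> 0" "d \<noteq> 0" "e \<noteq> 0"
  assumes hn: "qpoch (q/a) q (-int(Suc n)) * qpoch (q/b) q (-int(Suc n)) * qpoch (q/c) q (-int(Suc n))
              * qpoch (q/d) q (-int(Suc n)) * qpoch (q/e) q (-int(Suc n)) \<noteq> 0"
  shows "FF q a b c d e (-int(Suc n)) = a/q * ((a*b*c*d*e)^n/q^n) * qp (q/a) q (Suc n) / qp a q (Suc n)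
     * (qp (q/b) q n * qp (q/c) q n * qp (q/d) q n * qp (q/e) q n) / (qp (b*q) q n * qp (c*q) q n * qp (d*q) q n * qp (e*q) q n)"
proof -
  define m where "m = Suc n"
  define T where "T = tq q m"
  have T0: "T \<noteq> 0" unfolding T_def using tq_nz[OF nz(1)] .
  have g1: "qpoch (q/x) q (-int m) = inverse ((-(q/x))^m / T * qp x q m)" if "x \<noteq> 0" for x
    unfolding m_def T_def qpoch_negSuc using NEG[of "q/x" q "Suc n"] nz(1) that by simp
  have g2: "qpoch (x*q) q (-int m) = inverse ((-(x*q))^m / T * qp (1/x) q m)" if "x \<noteq> 0" for x
  proof -
    have "q/(x*q) = 1/x" using nz(1) that by simp
    then show ?thesis unfolding m_def T_def qpoch_negSuc using NEG[of "x*q" q "Suc n"] nz(1) that by simp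
  qed
  have g3: "qpoch a q (-int m) = inverse ((-a)^m / T * qp (q/a) q m)"
    unfolding m_def T_def qpoch_negSuc using NEG[of a q "Suc n"] nz(1,2) by simp
  have hn': "qpoch (q/a) q (-int m) * qpoch (q/b) q (-int m) * qpoch (q/c) q (-int m)
              * qpoch (q/d) q (-int m) * qpoch (q/e) q (-int m) \<noteq> 0" using hn by (simp add: m_def)
  have nq: "qp a q m \<noteq> 0" "qp b q m \<noteq> 0" "qp c q m \<noteq> 0" "qp d q m \<noteq> 0" "qp e q m \<noteq> 0"
    using hn' unfolding g1[OF nz(2)] g1[OF nz(3)] g1[OF nz(4)] g1[OF nz(5)] g1[OF nz(6)] by auto
  have nq2: "1 - x \<noteq> 0 \<and> qp (x*q) q n \<noteq> 0" if "qp x q m \<noteq> 0" for x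
    using that unfolding m_def qp_Suc2 by auto
  have s1: "qp x q m = (1-x) * qp (x*q) q n" for x unfolding m_def qp_Suc2 ..
  have s2: "qp (1/x) q m = (1 - 1/x) * qp (q/x) q n" for x unfolding m_def qp_Suc2 by simp
  define sg where "sg = ((-1)::complex)^n"
  define qn where "qn = q^n"
  define an where "an = a^n"
  define bn where "bn = b^n"
  define cn where "cn = c^n"
  define dn where "dn = d^n"
  define en where "en = e^n"
  have atz: "sg \<noteq> 0" "qn \<noteq> 0" "an \<noteq> 0" "bn \<noteq> 0" "cn \<noteq> 0" "dn \<noteq> 0" "en \<noteq> 0"
    using nz by (simp_all add: sg_def qn_def an_def bn_def cn_def dn_def en_def)
  have p1: "(-(q/x))^m = - (sg * (q/x * (qn/x^n)))" for x unfolding m_def hp sg_def qn_def by (simp add: power_divide)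
  have p2: "(-(x*q))^m = - (sg * (x*q * (x^n*qn)))" for x unfolding m_def hp sg_def qn_def by (simp add: power_mult_distrib)
  have p3: "(-a)^m = - (sg * (a*an))" unfolding m_def hp sg_def an_def ..
  have p4: "(a*b*c*d*e) powi (-int m) = inverse ((a*b*c*d*e) * (an*bn*cn*dn*en))"
    unfolding power_int_minus power_int_of_nat m_def an_def bn_def cn_def dn_def en_def by (simp add: power_mult_distrib)
  have p5: "(a*b*c*d*e)^n = an*bn*cn*dn*en"
    unfolding an_def bn_def cn_def dn_def en_def by (simp add: power_mult_distrib)
  have dv: "N1 / (inverse X1 * inverse X2 * inverse X3 * inverse X4 * inverse X5) = N1 * (X1*X2*X3*X4*X5)" for N1 X1 X2 X3 X4 X5 :: complex
    by (simp add: divide_inverse inverse_mult_distrib)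
  have L: "FF q a b c d e (-int m) = inverse ((-(q/a))^m / T * qp a q m) * inverse ((-(q/b))^m / T * qp b q m)
     * inverse ((-(q/c))^m / T * qp c q m) * inverse ((-(q/d))^m / T * qp d q m) * inverse ((-(q/e))^m / T * qp e q m)
     * (((-a)^m / T * qp (q/a) q m) * ((-(b*q))^m / T * qp (1/b) q m) * ((-(c*q))^m / T * qp (1/c) q m)
        * ((-(d*q))^m / T * qp (1/d) q m) * ((-(e*q))^m / T * qp (1/e) q m)) * (a*b*c*d*e) powi (-int m)"
    unfolding FF_def g1[OF nz(2)] g1[OF nz(3)] g1[OF nz(4)] g1[OF nz(5)] g1[OF nz(6)]
      g2[OF nz(3)] g2[OF nz(4)] g2[OF nz(5)] g2[OF nz(6)] g3 dv ..
  have e: "FF q a b c d e (-int m) =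
       (inverse ((-(q/a))^m / T * qp a q m) * ((-a)^m / T * qp (q/a) q m))
     * (inverse ((-(q/b))^m / T * qp b q m) * ((-(b*q))^m / T * qp (1/b) q m))
     * (inverse ((-(q/c))^m / T * qp c q m) * ((-(c*q))^m / T * qp (1/c) q m))
     * (inverse ((-(q/d))^m / T * qp d q m) * ((-(d*q))^m / T * qp (1/d) q m))
     * (inverse ((-(q/e))^m / T * qp e q m) * ((-(e*q))^m / T * qp (1/e) q m))
     * (a*b*c*d*e) powi (-int m)" unfolding L by (simp only: mult_ac)
  have p4': "(a*b*c*d*e) powi (-int m) = inverse ((a*b*c*d*e) * (a^n*b^n*c^n*d^n*e^n))"
    unfolding power_int_minus power_int_of_nat m_def by (simp add: power_mult_distrib)
  have "FF q a b c d e (-int m) = a * a * a^n * a^n / (q * q^n) * qp (q/a) q m / qp a q m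
     * (- b * b^n * b^n * qp (q/b) q n / qp (b*q) q n) * (- c * c^n * c^n * qp (q/c) q n / qp (c*q) q n)
     * (- d * d^n * d^n * qp (q/d) q n / qp (d*q) q n) * (- e * e^n * e^n * qp (q/e) q n / qp (e*q) q n)
     * inverse ((a*b*c*d*e) * (a^n*b^n*c^n*d^n*e^n))"
    unfolding e p4' unfolding m_def
    unfolding piece_a[OF nz(1,2) T0 nq(1)[unfolded m_def]] piece_x[OF nz(1,3) T0 nq(2)[unfolded m_def]]
      piece_x[OF nz(1,4) T0 nq(3)[unfolded m_def]] piece_x[OF nz(1,5) T0 nq(4)[unfolded m_def]]
      piece_x[OF nz(1,6) T0 nq(5)[unfolded m_def]] ..
  also have "... = a/q * ((a*b*c*d*e)^n/q^n) * qp (q/a) q (Suc n) / qp a q (Suc n)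
     * (qp (q/b) q n * qp (q/c) q n * qp (q/d) q n * qp (q/e) q n) / (qp (b*q) q n * qp (c*q) q n * qp (d*q) q n * qp (e*q) q n)"
    unfolding m_def p5[unfolded an_def bn_def cn_def dn_def en_def] using nz atz[unfolded an_def bn_def cn_def dn_def en_def qn_def]
    by (simp add: field_simps)
  finally show ?thesis unfolding m_def .
qed


lemma pair_alg:
  fixes q a qa qan B D zn qn h h2 h3 :: complex
  assumes nz: "q \<noteq> 0" "a \<noteq> 0" "qan \<noteq> 0" "D \<noteq> 0" "qn \<noteq> 0" "h \<noteq> 0" "h3 \<noteq> 0"
  assumes hh: "h = 1 - a*qn" "h2 = 1 - q/a*qn" "h3 = 1 - a"
  shows "qa*B/(qan*D)*zn + a/q*(zn/qn)*(qa*h2)/(qan*h)*B/D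
       = a/q/h3*((1 - q*qn*qn)*(qa*B)/((qan*h/h3)*D)*(zn/qn))"
proof -
  have "qa*B/(qan*D)*zn + a/q*(zn/qn)*(qa*h2)/(qan*h)*B/D
      - a/q/h3*((1 - q*qn*qn)*(qa*B)/((qan*h/h3)*D)*(zn/qn))
      = qa*B*zn/(qan*D*q*qn*h) * (q*qn*h + a*h2 - a*(1 - q*qn*qn))"
    using nz by (simp add: field_simps)
  also have "q*qn*h + a*h2 - a*(1 - q*qn*qn) = 0"
    unfolding hh using nz by (simp add: field_simps)
  finally show ?thesis by simp
qed

lemma pairterm:
  fixes q a b c d e :: complex and n :: nat
  assumes nz: "q \<noteq> 0" "a \<noteq> 0" "b \<noteq> 0" "c \<noteq> 0" "d \<noteq> 0" "e \<noteq> 0"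
  assumes hn: "qpoch (q/a) q (-int(Suc n)) * qpoch (q/b) q (-int(Suc n)) * qpoch (q/c) q (-int(Suc n))
              * qpoch (q/d) q (-int(Suc n)) * qpoch (q/e) q (-int(Suc n)) \<noteq> 0"
  assumes ha: "qp a q (Suc n) \<noteq> 0"
  assumes hx: "qp (b*q) q n \<noteq> 0" "qp (c*q) q n \<noteq> 0" "qp (d*q) q n \<noteq> 0" "qp (e*q) q n \<noteq> 0"
  shows "FF q a b c d e (int n) + FF q a b c d e (-int(Suc n))
     = a/q/(1-a) * ((1 - q^(2*n+1)) * (qp (q/a) q n * qp (q/b) q n * qp (q/c) q n * qp (q/d) q n * qp (q/e) q n)
        / (qp (a*q) q n * qp (b*q) q n * qp (c*q) q n * qp (d*q) q n * qp (e*q) q n) * (a*b*c*d*e/q)^n)"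
proof -
  define zn where "zn = (a*b*c*d*e)^n"
  define qn where "qn = q^n"
  have zq: "zn \<noteq> 0" "qn \<noteq> 0" using nz by (simp_all add: zn_def qn_def)
  have a1: "qp a q (Suc n) = qp a q n * (1 - a*qn)" unfolding qp_Suc qn_def ..
  have a2: "qp a q (Suc n) = (1 - a) * qp (a*q) q n" unfolding qp_Suc2 ..
  have na1: "qp a q n \<noteq> 0" "1 - a*qn \<noteq> 0" using ha unfolding a1 by auto
  have na2: "1 - a \<noteq> 0" "qp (a*q) q n \<noteq> 0" using ha unfolding a2 by auto
  note na = na1 na2
  have a3: "qp (a*q) q n = qp a q n * (1 - a*qn) / (1-a)" using a1 a2 na by (simp add: field_simps)
  have a4: "qp (q/a) q (Suc n) = qp (q/a) q n * (1 - q/a*qn)" unfolding qp_Suc qn_def ..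
  have p: "(a*b*c*d*e/q)^n = zn/qn" unfolding zn_def qn_def by (simp add: power_divide)
  have pq: "q^(2*n+1) = q*qn*qn" unfolding qn_def by (simp add: power_add power_mult mult_ac power2_eq_square)
  have F1: "FF q a b c d e (int n) = (qp (q/a) q n * qp (q/b) q n * qp (q/c) q n * qp (q/d) q n * qp (q/e) q n)
            / (qp a q n * qp (b*q) q n * qp (c*q) q n * qp (d*q) q n * qp (e*q) q n) * zn"
    unfolding FF_def qpoch_nat zn_def by simp
  have P: "(qp (q/a) q n * qp (q/b) q n * qp (q/c) q n * qp (q/d) q n * qp (q/e) q n)
            / (qp a q n * qp (b*q) q n * qp (c*q) q n * qp (d*q) q n * qp (e*q) q n) * zn
         + a/q * (zn/qn) * (qp (q/a) q n * (1 - q/a*qn)) / (qp a q n * (1 - a*qn))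
           * (qp (q/b) q n * qp (q/c) q n * qp (q/d) q n * qp (q/e) q n) / (qp (b*q) q n * qp (c*q) q n * qp (d*q) q n * qp (e*q) q n)
      = a/q/(1-a) * ((1 - q*qn*qn) * (qp (q/a) q n * (qp (q/b) q n * qp (q/c) q n * qp (q/d) q n * qp (q/e) q n))
        / ((qp a q n * (1 - a*qn) / (1-a)) * (qp (b*q) q n * qp (c*q) q n * qp (d*q) q n * qp (e*q) q n)) * (zn/qn))"
    using pair_alg[OF nz(1,2) na(1) _ zq(2) na(2,3) refl refl refl, of "qp (b*q) q n * qp (c*q) q n * qp (d*q) q n * qp (e*q) q n"
        "qp (q/a) q n" "qp (q/b) q n * qp (q/c) q n * qp (q/d) q n * qp (q/e) q n" zn] hx
    by (simp add: mult_ac)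
  show ?thesis unfolding F1 negterm[OF nz hn] unfolding a1 a3 a4 p pq zn_def[symmetric] qn_def[symmetric]
    using P by (simp add: mult_ac)
qed


lemma qinv_zero_spec: "q \<noteq> 0 \<Longrightarrow> x = q^Suc N \<Longrightarrow> N < n \<Longrightarrow> qp (q/x) q n = 0"
  using qp_inv_zero[of q N n] by (simp add: field_simps)

lemma LHS_reduce:
  fixes q a b c d e :: complex and N :: nat
  assumes nz: "q \<noteq> 0" "a \<noteq> 0" "b \<noteq> 0" "c \<noteq> 0" "d \<noteq> 0" "e \<noteq> 0"
    and hsp: "a = q^Suc N \<or> b = q^Suc N \<or> c = q^Suc N"
    and hden_pos: "\<And>k::int. k \<ge> 0 \<Longrightarrow>
        qpoch a q k * qpoch (b*q) q k * qpoch (c*q) q k * qpoch (d*q) q k * qpoch (e*q) q k \<noteq> 0"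
    and hnum_neg: "\<And>k::int. k < 0 \<Longrightarrow>
        qpoch (q/a) q k * qpoch (q/b) q k * qpoch (q/c) q k * qpoch (q/d) q k * qpoch (q/e) q k \<noteq> 0"
  shows "infsum (FF q a b c d e) UNIV = a/q/(1-a) * (\<Sum>n\<le>N. (1 - q^(2*n+1)) * (qp (q/a) q n * qp (q/b) q n * qp (q/c) q n * qp (q/d) q n * qp (q/e) q n)
        / (qp (a*q) q n * qp (b*q) q n * qp (c*q) q n * qp (d*q) q n * qp (e*q) q n) * (a*b*c*d*e/q)^n)"
proof -
  define p where "p = Suc N"
  define S where "S = {-(int p)..int p - 1}"
  have z3: "qp (q/a) q n * qp (q/b) q n * qp (q/c) q n = 0" if "N < n" for n
    using hsp qinv_zero_spec[OF nz(1) _ that] by auto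
  have hn: "qpoch (q/a) q (-int(Suc n)) * qpoch (q/b) q (-int(Suc n)) * qpoch (q/c) q (-int(Suc n))
              * qpoch (q/d) q (-int(Suc n)) * qpoch (q/e) q (-int(Suc n)) \<noteq> 0" for n
    using hnum_neg[of "-int(Suc n)"] by simp
  have zero_out: "FF q a b c d e k = 0" if "k \<notin> S" for k
  proof (cases "k \<ge> 0")
    case True
    then obtain n where kn: "k = int n" by (metis nonneg_eq_int)
    with that True have "N < n" by (simp add: S_def p_def)
    from z3[OF this] show ?thesis unfolding kn FF_def qpoch_nat by auto
  next
    case False
    define n where "n = nat (-k-1)"
    have kn: "k = -int (Suc n)" using False by (simp add: n_def)
    with that have "N < n" by (simp add: S_def p_def)
    hence "qp (q/a) q (Suc n) * qp (q/b) q n * qp (q/c) q n = 0"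
      using hsp qinv_zero_spec[OF nz(1)] by auto
    then show ?thesis unfolding kn negterm[OF nz hn] by auto
  qed
  have "infsum (FF q a b c d e) UNIV = infsum (FF q a b c d e) S"
    by (rule infsum_cong_neutral) (auto simp: zero_out)
  also have "... = sum (FF q a b c d e) S" by (simp add: S_def)
  also have "S = int ` {..<p} \<union> (\<lambda>n. -int(Suc n)) ` {..<p}"
  proof (rule set_eqI)
    fix k
    show "k \<in> S \<longleftrightarrow> k \<in> int ` {..<p} \<union> (\<lambda>n. -int(Suc n)) ` {..<p}"
    proof
      assume "k \<in> S"
      show "k \<in> int ` {..<p} \<union> (\<lambda>n. -int(Suc n)) ` {..<p}"
      proof (cases "k \<ge> 0")
        case True
        hence "k = int (nat k)" "nat k < p" using \<open>k \<in> S\<close> by (auto simp: S_def)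
        then show ?thesis by (metis UnI1 image_eqI lessThan_iff)
      next
        case False
        hence "k = -int(Suc (nat (-k-1)))" "nat (-k-1) < p" using \<open>k \<in> S\<close> by (auto simp: S_def)
        then show ?thesis by (metis (no_types, lifting) UnI2 image_eqI lessThan_iff)
      qed
    next
      assume "k \<in> int ` {..<p} \<union> (\<lambda>n. -int(Suc n)) ` {..<p}"
      then show "k \<in> S" by (auto simp: S_def)
    qed
  qed
  also have "sum (FF q a b c d e) (int ` {..<p} \<union> (\<lambda>n. -int(Suc n)) ` {..<p})
      = sum (FF q a b c d e) (int ` {..<p}) + sum (FF q a b c d e) ((\<lambda>n. -int(Suc n)) ` {..<p})"
    by (rule sum.union_disjoint) auto
  also have "sum (FF q a b c d e) (int ` {..<p}) = (\<Sum>n<p. FF q a b c d e (int n))"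
    by (subst sum.reindex) (auto simp: inj_on_def)
  also have "sum (FF q a b c d e) ((\<lambda>n. -int(Suc n)) ` {..<p}) = (\<Sum>n<p. FF q a b c d e (-int(Suc n)))"
    by (subst sum.reindex) (auto simp: inj_on_def)
  also have "(\<Sum>n<p. FF q a b c d e (int n)) + (\<Sum>n<p. FF q a b c d e (-int(Suc n)))
      = (\<Sum>n<p. FF q a b c d e (int n) + FF q a b c d e (-int(Suc n)))" by (simp add: sum.distrib)
  also have "... = (\<Sum>n<p. a/q/(1-a) * ((1 - q^(2*n+1)) * (qp (q/a) q n * qp (q/b) q n * qp (q/c) q n * qp (q/d) q n * qp (q/e) q n)
        / (qp (a*q) q n * qp (b*q) q n * qp (c*q) q n * qp (d*q) q n * qp (e*q) q n) * (a*b*c*d*e/q)^n))"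
  proof (rule sum.cong[OF refl])
    fix n assume "n \<in> {..<p}"
    have h1: "qpoch a q (int (Suc n)) * qpoch (b*q) q (int (Suc n)) * qpoch (c*q) q (int (Suc n)) * qpoch (d*q) q (int (Suc n)) * qpoch (e*q) q (int (Suc n)) \<noteq> 0"
      by (rule hden_pos) simp
    have h2: "qpoch a q (int n) * qpoch (b*q) q (int n) * qpoch (c*q) q (int n) * qpoch (d*q) q (int n) * qpoch (e*q) q (int n) \<noteq> 0"
      by (rule hden_pos) simp
    have ha: "qp a q (Suc n) \<noteq> 0" using h1 unfolding qpoch_nat by auto
    have hx: "qp (b*q) q n \<noteq> 0" "qp (c*q) q n \<noteq> 0" "qp (d*q) q n \<noteq> 0" "qp (e*q) q n \<noteq> 0"
      using h2 unfolding qpoch_nat by auto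
    show "FF q a b c d e (int n) + FF q a b c d e (-int(Suc n)) = a/q/(1-a) * ((1 - q^(2*n+1)) * (qp (q/a) q n * qp (q/b) q n * qp (q/c) q n * qp (q/d) q n * qp (q/e) q n)
        / (qp (a*q) q n * qp (b*q) q n * qp (c*q) q n * qp (d*q) q n * qp (e*q) q n) * (a*b*c*d*e/q)^n)"
      by (rule pairterm[OF nz hn ha hx])
  qed
  also have "... = a/q/(1-a) * (\<Sum>n\<le>N. (1 - q^(2*n+1)) * (qp (q/a) q n * qp (q/b) q n * qp (q/c) q n * qp (q/d) q n * qp (q/e) q n)
        / (qp (a*q) q n * qp (b*q) q n * qp (c*q) q n * qp (d*q) q n * qp (e*q) q n) * (a*b*c*d*e/q)^n)"
    unfolding sum_distrib_left p_def lessThan_Suc_atMost ..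
  finally show ?thesis .
qed


definition VV where
 "VV q a b c d e n = (1 - q^(2*n+1)) * (qp (q/a) q n * qp (q/b) q n * qp (q/c) q n * qp (q/d) q n * qp (q/e) q n)
        / (qp (a*q) q n * qp (b*q) q n * qp (c*q) q n * qp (d*q) q n * qp (e*q) q n) * (a*b*c*d*e/q)^n"

definition PH where
 "PH q a b c d e k = (qp (q/a) q k * qp (q/b) q k * qp (q/c) q k * qp (d*e) q k)
     / (qp q q k * qp (q^2/(a*b*c)) q k * qp (d*q) q k * qp (e*q) q k) * q^k"

definition XX where "XX q a b c = qpoch_inf q q * qpoch_inf (a*b) q * qpoch_inf (b*c) q * qpoch_inf (a*c) q"
definition YY where "YY q a b c = qpoch_inf a q * qpoch_inf (b*q) q * qpoch_inf (c*q) q * qpoch_inf (a*b*c/q) q"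

lemma fin_alg:
  fixes a q A1 A2 B C D S X Y :: complex
  assumes "(1-q)*A2 = A1*(1-a)" "1 - a \<noteq> 0" "X/Y = A1*B/(C*D)"
  shows "a/q/(1-a) * ((1-q) * (A2*B/(C*D)) * S) = a*X/(q*Y) * S"
proof -
  have "a*X/(q*Y) = a/q * (X/Y)" by simp
  also have "... = a/q * (A1*B/(C*D))" using assms(3) by simp
  finally have r: "a*X/(q*Y) = a/q * (A1*B/(C*D))" .
  have "a/q/(1-a) * ((1-q) * (A2*B/(C*D)) * S) = a/q/(1-a) * (((1-q)*A2)*B/(C*D) * S)" by simp
  also have "... = a/q/(1-a) * ((A1*(1-a))*B/(C*D) * S)" using assms(1) by simp
  also have "... = a/q/(1-a) * ((1-a) * (A1*B/(C*D) * S))" by (simp add: mult_ac)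
  also have "... = a/q * (A1*B/(C*D) * S)" using assms(2) by simp
  finally show ?thesis using r by (simp add: mult_ac)
qed

lemma case_a:
  fixes q a b c d e :: complex and N :: nat
  assumes nz: "q \<noteq> 0" "a \<noteq> 0" "b \<noteq> 0" "c \<noteq> 0" "d \<noteq> 0" "e \<noteq> 0"
  assumes q1: "cmod q < 1" and hq: "\<And>i. q^Suc i \<noteq> 1"
  assumes sp: "a = q^Suc N"
  assumes hd: "qp (b*q) q N \<noteq> 0" "qp (c*q) q N \<noteq> 0" "qp (d*q) q N \<noteq> 0" "qp (e*q) q N \<noteq> 0"
  assumes hr: "qp (q^2/(a*b*c)) q N \<noteq> 0"
  assumes hi: "YY q a b c \<noteq> 0"
  shows "a/q/(1-a) * (\<Sum>n\<le>N. VV q a b c d e n) = a * XX q a b c / (q * YY q a b c) * (\<Sum>j\<le>N. PH q a b c d e j)"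
proof -
  have e1: "q/a = 1/q^N" using nz(1) sp by (simp add: field_simps)
  have e2: "a*q = q^(N+2)" using sp by (simp add: power_add)
  have e3: "a*b*c*d*e/q = q^N*d*e*b*c" using nz(1) sp by (simp add: field_simps)
  have e4: "q^2/(a*b*c) = q/(b*c*q^N)" using nz sp by (simp add: field_simps power2_eq_square)
  have S1: "(\<Sum>n\<le>N. VV q a b c d e n) = (\<Sum>k\<le>N. (1 - q^(2*k+1)) * (qp (1/q^N) q k * qp (q/d) q k * qp (q/e) q k * qp (q/b) q k * qp (q/c) q k)
      / (qp (q^(N+2)) q k * qp (d*q) q k * qp (e*q) q k * qp (b*q) q k * qp (c*q) q k)
      * (q^N*d*e*b*c)^k)"
    unfolding VV_def e1 e2 e3 by (simp add: mult_ac)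
  have W: "(\<Sum>k\<le>N. (1 - q^(2*k+1)) * (qp (1/q^N) q k * qp (q/d) q k * qp (q/e) q k * qp (q/b) q k * qp (q/c) q k)
      / (qp (q^(N+2)) q k * qp (d*q) q k * qp (e*q) q k * qp (b*q) q k * qp (c*q) q k)
      * (q^N*d*e*b*c)^k)
   = (1-q) * (qp (q^2) q N * qp (b*c) q N / (qp (b*q) q N * qp (c*q) q N))
     * (\<Sum>j\<le>N. qp (1/q^N) q j * qp (q/b) q j * qp (q/c) q j * qp (d*e) q j
        / (qp q q j * qp (d*q) q j * qp (e*q) q j * qp (q/(b*c*q^N)) q j) * q^j)"
    by (rule watson_q[OF nz(1,5,6,3,4) hq hd(3,4,1,2) hr[unfolded e4]])
  have S2: "(\<Sum>j\<le>N. qp (1/q^N) q j * qp (q/b) q j * qp (q/c) q j * qp (d*e) q j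
        / (qp q q j * qp (d*q) q j * qp (e*q) q j * qp (q/(b*c*q^N)) q j) * q^j) = (\<Sum>j\<le>N. PH q a b c d e j)"
    unfolding PH_def e1 e4 by (simp add: mult_ac)
  have i1: "qpoch_inf q q = qp q q N * qpoch_inf a q" using qinf_split[OF q1, of q N] sp by simp
  have i2: "qpoch_inf (b*q) q = qp (b*q) q N * qpoch_inf (a*b) q"
    using qinf_split[OF q1, of "b*q" N] sp by (simp add: mult_ac)
  have i3: "qpoch_inf (c*q) q = qp (c*q) q N * qpoch_inf (a*c) q"
    using qinf_split[OF q1, of "c*q" N] sp by (simp add: mult_ac)
  have i4: "qpoch_inf (b*c) q = qp (b*c) q N * qpoch_inf (a*b*c/q) q"
  proof -
    have "b*c*q^N = a*b*c/q" using sp nz(1) by (simp add: field_simps)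
    then show ?thesis using qinf_split[OF q1, of "b*c" N] by simp
  qed
  have Y0: "qpoch_inf a q \<noteq> 0" "qpoch_inf (b*q) q \<noteq> 0" "qpoch_inf (c*q) q \<noteq> 0" "qpoch_inf (a*b*c/q) q \<noteq> 0"
    using hi by (auto simp: YY_def)
  have Y1: "qpoch_inf (a*b) q \<noteq> 0" "qpoch_inf (a*c) q \<noteq> 0" using Y0(2,3) unfolding i2 i3 by auto
  have R: "XX q a b c / YY q a b c = qp q q N * qp (b*c) q N / (qp (b*q) q N * qp (c*q) q N)"
    unfolding XX_def YY_def i1 i4 unfolding i2 i3 using Y0(1,4) Y1 hd(1,2) by (simp add: field_simps)
  have pq: "(1-q) * qp (q^2) q N = qp q q N * (1 - a)"
  proof -
    have "(1-q) * qp (q^2) q N = qp q q (Suc N)" unfolding qp_Suc2 by (simp add: power2_eq_square)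
    also have "... = qp q q N * (1 - a)" unfolding qp_Suc sp by simp
    finally show ?thesis .
  qed
  have a1: "1 - a \<noteq> 0" using hq[of N] sp by auto
  show ?thesis unfolding S1 W S2 by (rule fin_alg[OF pq a1 R])
qed


lemma case_b:
  fixes q a b c d e :: complex and N :: nat
  assumes nz: "q \<noteq> 0" "a \<noteq> 0" "b \<noteq> 0" "c \<noteq> 0" "d \<noteq> 0" "e \<noteq> 0"
  assumes q1: "cmod q < 1" and hq: "\<And>i. q^Suc i \<noteq> 1"
  assumes sp: "b = q^Suc N"
  assumes hd: "qp a q (Suc N) \<noteq> 0" "qp (c*q) q N \<noteq> 0" "qp (d*q) q N \<noteq> 0" "qp (e*q) q N \<noteq> 0"
  assumes hr: "qp (q^2/(a*b*c)) q N \<noteq> 0"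
  assumes hi: "YY q a b c \<noteq> 0"
  shows "a/q/(1-a) * (\<Sum>n\<le>N. VV q a b c d e n) = a * XX q a b c / (q * YY q a b c) * (\<Sum>j\<le>N. PH q a b c d e j)"
proof -
  have sa: "qp a q (Suc N) = (1-a) * qp (a*q) q N" unfolding qp_Suc2 ..
  have a1: "1 - a \<noteq> 0" and haq: "qp (a*q) q N \<noteq> 0" using hd(1) unfolding sa by auto
  have e1: "q/b = 1/q^N" using nz(1) sp by (simp add: field_simps)
  have e2: "b*q = q^(N+2)" using sp by (simp add: power_add)
  have e3: "a*b*c*d*e/q = q^N*d*e*a*c" using nz(1) sp by (simp add: field_simps)
  have e4: "q^2/(a*b*c) = q/(a*c*q^N)" using nz sp by (simp add: field_simps power2_eq_square)
  have S1: "(\<Sum>n\<le>N. VV q a b c d e n) = (\<Sum>k\<le>N. (1 - q^(2*k+1)) * (qp (1/q^N) q k * qp (q/d) q k * qp (q/e) q k * qp (q/a) q k * qp (q/c) q k)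
      / (qp (q^(N+2)) q k * qp (d*q) q k * qp (e*q) q k * qp (a*q) q k * qp (c*q) q k)
      * (q^N*d*e*a*c)^k)"
    unfolding VV_def e1 e2 e3 by (simp add: mult_ac)
  have W: "(\<Sum>k\<le>N. (1 - q^(2*k+1)) * (qp (1/q^N) q k * qp (q/d) q k * qp (q/e) q k * qp (q/a) q k * qp (q/c) q k)
      / (qp (q^(N+2)) q k * qp (d*q) q k * qp (e*q) q k * qp (a*q) q k * qp (c*q) q k)
      * (q^N*d*e*a*c)^k)
   = (1-q) * (qp (q^2) q N * qp (a*c) q N / (qp (a*q) q N * qp (c*q) q N))
     * (\<Sum>j\<le>N. qp (1/q^N) q j * qp (q/a) q j * qp (q/c) q j * qp (d*e) q j
        / (qp q q j * qp (d*q) q j * qp (e*q) q j * qp (q/(a*c*q^N)) q j) * q^j)"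
    by (rule watson_q[OF nz(1,5,6,2,4) hq hd(3,4) haq hd(2) hr[unfolded e4]])
  have S2: "(\<Sum>j\<le>N. qp (1/q^N) q j * qp (q/a) q j * qp (q/c) q j * qp (d*e) q j
        / (qp q q j * qp (d*q) q j * qp (e*q) q j * qp (q/(a*c*q^N)) q j) * q^j) = (\<Sum>j\<le>N. PH q a b c d e j)"
    unfolding PH_def e1 e4 by (simp add: mult_ac)
  have i1: "qpoch_inf q q = qp q q (Suc N) * qpoch_inf (b*q) q"
    using qinf_split[OF q1, of q "Suc N"] sp by (simp add: mult_ac)
  have i2: "qpoch_inf a q = qp a q (Suc N) * qpoch_inf (a*b) q"
    using qinf_split[OF q1, of a "Suc N"] sp by (simp add: mult_ac)
  have i3: "qpoch_inf (c*q) q = qp (c*q) q N * qpoch_inf (b*c) q"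
    using qinf_split[OF q1, of "c*q" N] sp by (simp add: mult_ac)
  have i4: "qpoch_inf (a*c) q = qp (a*c) q N * qpoch_inf (a*b*c/q) q"
  proof -
    have "a*c*q^N = a*b*c/q" using sp nz(1) by (simp add: field_simps)
    then show ?thesis using qinf_split[OF q1, of "a*c" N] by simp
  qed
  have Y0: "qpoch_inf a q \<noteq> 0" "qpoch_inf (b*q) q \<noteq> 0" "qpoch_inf (c*q) q \<noteq> 0" "qpoch_inf (a*b*c/q) q \<noteq> 0"
    using hi by (auto simp: YY_def)
  have Y1: "qpoch_inf (a*b) q \<noteq> 0" "qpoch_inf (b*c) q \<noteq> 0" using Y0(1,3) unfolding i2 i3 by auto
  have R: "XX q a b c / YY q a b c = (qp q q (Suc N) / (1-a)) * qp (a*c) q N / (qp (a*q) q N * qp (c*q) q N)"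
  proof -
    have "XX q a b c / YY q a b c = qp q q (Suc N) * qp (a*c) q N / (qp a q (Suc N) * qp (c*q) q N)"
      unfolding XX_def YY_def i4 unfolding i1 i2 i3 using Y0(2,4) Y1 hd(1,2) by (simp add: field_simps)
    also have "... = (qp q q (Suc N) / (1-a)) * qp (a*c) q N / (qp (a*q) q N * qp (c*q) q N)"
      unfolding sa using a1 haq hd(2) by (simp add: field_simps)
    finally show ?thesis .
  qed
  have pq: "(1-q) * qp (q^2) q N = (qp q q (Suc N) / (1-a)) * (1 - a)"
    unfolding qp_Suc2 using a1 by (simp add: power2_eq_square)
  show ?thesis unfolding S1 W S2 by (rule fin_alg[OF pq a1 R])
qed

lemma case_c:
  fixes q a b c d e :: complex and N :: nat
  assumes nz: "q \<noteq> 0" "a \<noteq> 0" "b \<noteq> 0" "c \<noteq> 0" "d \<noteq> 0" "e \<noteq> 0"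
  assumes q1: "cmod q < 1" and hq: "\<And>i. q^Suc i \<noteq> 1"
  assumes sp: "c = q^Suc N"
  assumes hd: "qp a q (Suc N) \<noteq> 0" "qp (b*q) q N \<noteq> 0" "qp (d*q) q N \<noteq> 0" "qp (e*q) q N \<noteq> 0"
  assumes hr: "qp (q^2/(a*b*c)) q N \<noteq> 0"
  assumes hi: "YY q a b c \<noteq> 0"
  shows "a/q/(1-a) * (\<Sum>n\<le>N. VV q a b c d e n) = a * XX q a b c / (q * YY q a b c) * (\<Sum>j\<le>N. PH q a b c d e j)"
proof -
  have sa: "qp a q (Suc N) = (1-a) * qp (a*q) q N" unfolding qp_Suc2 ..
  have a1: "1 - a \<noteq> 0" and haq: "qp (a*q) q N \<noteq> 0" using hd(1) unfolding sa by auto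
  have e1: "q/c = 1/q^N" using nz(1) sp by (simp add: field_simps)
  have e2: "c*q = q^(N+2)" using sp by (simp add: power_add)
  have e3: "a*b*c*d*e/q = q^N*d*e*a*b" using nz(1) sp by (simp add: field_simps)
  have e4: "q^2/(a*b*c) = q/(a*b*q^N)" using nz sp by (simp add: field_simps power2_eq_square)
  have S1: "(\<Sum>n\<le>N. VV q a b c d e n) = (\<Sum>k\<le>N. (1 - q^(2*k+1)) * (qp (1/q^N) q k * qp (q/d) q k * qp (q/e) q k * qp (q/a) q k * qp (q/b) q k)
      / (qp (q^(N+2)) q k * qp (d*q) q k * qp (e*q) q k * qp (a*q) q k * qp (b*q) q k)
      * (q^N*d*e*a*b)^k)"
    unfolding VV_def e1 e2 e3 by (simp add: mult_ac)
  have W: "(\<Sum>k\<le>N. (1 - q^(2*k+1)) * (qp (1/q^N) q k * qp (q/d) q k * qp (q/e) q k * qp (q/a) q k * qp (q/b) q k)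
      / (qp (q^(N+2)) q k * qp (d*q) q k * qp (e*q) q k * qp (a*q) q k * qp (b*q) q k)
      * (q^N*d*e*a*b)^k)
   = (1-q) * (qp (q^2) q N * qp (a*b) q N / (qp (a*q) q N * qp (b*q) q N))
     * (\<Sum>j\<le>N. qp (1/q^N) q j * qp (q/a) q j * qp (q/b) q j * qp (d*e) q j
        / (qp q q j * qp (d*q) q j * qp (e*q) q j * qp (q/(a*b*q^N)) q j) * q^j)"
    by (rule watson_q[OF nz(1,5,6,2,3) hq hd(3,4) haq hd(2) hr[unfolded e4]])
  have S2: "(\<Sum>j\<le>N. qp (1/q^N) q j * qp (q/a) q j * qp (q/b) q j * qp (d*e) q j
        / (qp q q j * qp (d*q) q j * qp (e*q) q j * qp (q/(a*b*q^N)) q j) * q^j) = (\<Sum>j\<le>N. PH q a b c d e j)"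
    unfolding PH_def e1 e4 by (simp add: mult_ac)
  have i1: "qpoch_inf q q = qp q q (Suc N) * qpoch_inf (c*q) q"
    using qinf_split[OF q1, of q "Suc N"] sp by (simp add: mult_ac)
  have i2: "qpoch_inf a q = qp a q (Suc N) * qpoch_inf (a*c) q"
    using qinf_split[OF q1, of a "Suc N"] sp by (simp add: mult_ac)
  have i3: "qpoch_inf (b*q) q = qp (b*q) q N * qpoch_inf (b*c) q"
    using qinf_split[OF q1, of "b*q" N] sp by (simp add: mult_ac)
  have i4: "qpoch_inf (a*b) q = qp (a*b) q N * qpoch_inf (a*b*c/q) q"
  proof -
    have "a*b*q^N = a*b*c/q" using sp nz(1) by (simp add: field_simps)
    then show ?thesis using qinf_split[OF q1, of "a*b" N] by simp
  qed
  have Y0: "qpoch_inf a q \<noteq> 0" "qpoch_inf (b*q) q \<noteq> 0" "qpoch_inf (c*q) q \<noteq> 0" "qpoch_inf (a*b*c/q) q \<noteq> 0"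
    using hi by (auto simp: YY_def)
  have Y1: "qpoch_inf (a*c) q \<noteq> 0" "qpoch_inf (b*c) q \<noteq> 0" using Y0(1,2) unfolding i2 i3 by auto
  have R: "XX q a b c / YY q a b c = (qp q q (Suc N) / (1-a)) * qp (a*b) q N / (qp (a*q) q N * qp (b*q) q N)"
  proof -
    have "XX q a b c / YY q a b c = qp q q (Suc N) * qp (a*b) q N / (qp a q (Suc N) * qp (b*q) q N)"
      unfolding XX_def YY_def i4 unfolding i1 i2 i3 using Y0(3,4) Y1 hd(1,2) by (simp add: field_simps)
    also have "... = (qp q q (Suc N) / (1-a)) * qp (a*b) q N / (qp (a*q) q N * qp (b*q) q N)"
      unfolding sa using a1 haq hd(2) by (simp add: field_simps)
    finally show ?thesis .
  qed
  have pq: "(1-q) * qp (q^2) q N = (qp q q (Suc N) / (1-a)) * (1 - a)"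
    unfolding qp_Suc2 using a1 by (simp add: power2_eq_square)
  show ?thesis unfolding S1 W S2 by (rule fin_alg[OF pq a1 R])
qed

theorem mainTheorem7:
  fixes q a b c d e :: complex
  assumes hq: "0 < cmod q" "cmod q < 1"
    and hnz: "a \<noteq> 0" "b \<noteq> 0" "c \<noteq> 0" "d \<noteq> 0" "e \<noteq> 0"
    and hpow: "\<exists>n::nat. n \<ge> 1 \<and> (a = q ^ n \<or> b = q ^ n \<or> c = q ^ n)"
    and hden_pos: "\<And>k::int. k \<ge> 0 \<Longrightarrow>
        qpoch a q k * qpoch (b*q) q k * qpoch (c*q) q k * qpoch (d*q) q k * qpoch (e*q) q k \<noteq> 0"
    and hnum_neg: "\<And>k::int. k < 0 \<Longrightarrow>
        qpoch (q/a) q k * qpoch (q/b) q k * qpoch (q/c) q k * qpoch (q/d) q k * qpoch (q/e) q k \<noteq> 0"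
    and hden_rhs: "\<And>k::int. k \<ge> 0 \<Longrightarrow>
        qpoch q q k * qpoch (q^2/(a*b*c)) q k * qpoch (d*q) q k * qpoch (e*q) q k \<noteq> 0"
    and hden_inf: "qpoch_inf a q * qpoch_inf (b*q) q * qpoch_inf (c*q) q * qpoch_inf (a*b*c/q) q \<noteq> 0"
  shows "(\<Sum>\<^sub>\<infinity>k::int.
            (qpoch (q/a) q k * qpoch (q/b) q k * qpoch (q/c) q k * qpoch (q/d) q k * qpoch (q/e) q k)
            / (qpoch a q k * qpoch (b*q) q k * qpoch (c*q) q k * qpoch (d*q) q k * qpoch (e*q) q k)
            * (a*b*c*d*e) powi k)
       = a * (qpoch_inf q q * qpoch_inf (a*b) q * qpoch_inf (b*c) q * qpoch_inf (a*c) q)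
         / (q * (qpoch_inf a q * qpoch_inf (b*q) q * qpoch_inf (c*q) q * qpoch_inf (a*b*c/q) q))
         * (\<Sum>k::nat.
              (qpoch (q/a) q (int k) * qpoch (q/b) q (int k) * qpoch (q/c) q (int k) * qpoch (d*e) q (int k))
              / (qpoch q q (int k) * qpoch (q^2/(a*b*c)) q (int k) * qpoch (d*q) q (int k) * qpoch (e*q) q (int k))
              * q ^ k)"
  proof -
  obtain p :: nat where p1: "p \<ge> 1" and hp: "a = q^p \<or> b = q^p \<or> c = q^p" using hpow by blast
  define N where "N = p - 1"
  have pN: "p = Suc N" using p1 by (simp add: N_def)
  have q0: "q \<noteq> 0" using hq(1) by auto
  have hqq: "q^Suc i \<noteq> 1" for i
  proof
    assume "q^Suc i = 1"
    hence "cmod q ^ Suc i = 1" by (metis norm_one norm_power)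
    moreover have "cmod q ^ Suc i < 1" using hq by (intro power_Suc_less_one) auto
    ultimately show False by simp
  qed
  note nz = q0 hnz
  have sp: "a = q^Suc N \<or> b = q^Suc N \<or> c = q^Suc N" using hp pN by simp
  have L1: "(\<Sum>\<^sub>\<infinity>k::int.
            (qpoch (q/a) q k * qpoch (q/b) q k * qpoch (q/c) q k * qpoch (q/d) q k * qpoch (q/e) q k)
            / (qpoch a q k * qpoch (b*q) q k * qpoch (c*q) q k * qpoch (d*q) q k * qpoch (e*q) q k)
            * (a*b*c*d*e) powi k) = infsum (FF q a b c d e) UNIV"
    unfolding FF_def ..
  also have "... = a/q/(1-a) * (\<Sum>n\<le>N. VV q a b c d e n)"
    unfolding VV_def by (rule LHS_reduce[OF nz sp hden_pos hnum_neg])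
  finally have L: "(\<Sum>\<^sub>\<infinity>k::int.
            (qpoch (q/a) q k * qpoch (q/b) q k * qpoch (q/c) q k * qpoch (q/d) q k * qpoch (q/e) q k)
            / (qpoch a q k * qpoch (b*q) q k * qpoch (c*q) q k * qpoch (d*q) q k * qpoch (e*q) q k)
            * (a*b*c*d*e) powi k) = a/q/(1-a) * (\<Sum>n\<le>N. VV q a b c d e n)" .
  have zPH: "PH q a b c d e j = 0" if "j \<notin> {..N}" for j
  proof -
    have "N < j" using that by simp
    hence "qp (q/a) q j * qp (q/b) q j * qp (q/c) q j = 0"
      using sp qinv_zero_spec[OF q0 _ \<open>N < j\<close>] by auto
    thus ?thesis unfolding PH_def by auto
  qed
  have R1: "(\<Sum>k::nat.
              (qpoch (q/a) q (int k) * qpoch (q/b) q (int k) * qpoch (q/c) q (int k) * qpoch (d*e) q (int k))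
              / (qpoch q q (int k) * qpoch (q^2/(a*b*c)) q (int k) * qpoch (d*q) q (int k) * qpoch (e*q) q (int k))
              * q ^ k) = (\<Sum>j\<le>N. PH q a b c d e j)"
    unfolding qpoch_nat PH_def[symmetric] by (rule suminf_finite) (use zPH in auto)
  have h0: "qpoch a q (int N) * qpoch (b*q) q (int N) * qpoch (c*q) q (int N) * qpoch (d*q) q (int N) * qpoch (e*q) q (int N) \<noteq> 0"
    by (rule hden_pos) simp
  have h1: "qpoch a q (int (Suc N)) * qpoch (b*q) q (int (Suc N)) * qpoch (c*q) q (int (Suc N)) * qpoch (d*q) q (int (Suc N)) * qpoch (e*q) q (int (Suc N)) \<noteq> 0"
    by (rule hden_pos) simp
  have hd: "qp (b*q) q N \<noteq> 0" "qp (c*q) q N \<noteq> 0" "qp (d*q) q N \<noteq> 0" "qp (e*q) q N \<noteq> 0"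
    using h0 unfolding qpoch_nat by auto
  have hda: "qp a q (Suc N) \<noteq> 0" using h1 unfolding qpoch_nat by auto
  have hr: "qp (q^2/(a*b*c)) q N \<noteq> 0"
    using hden_rhs[of "int N"] unfolding qpoch_nat by auto
  have hi: "YY q a b c \<noteq> 0" using hden_inf unfolding YY_def .
  have C: "a/q/(1-a) * (\<Sum>n\<le>N. VV q a b c d e n) = a * XX q a b c / (q * YY q a b c) * (\<Sum>j\<le>N. PH q a b c d e j)"
  proof -
    { assume "a = q^Suc N"
      then have ?thesis by (rule case_a[OF nz hq(2) hqq _ hd hr hi]) }
    moreover
    { assume "b = q^Suc N"
      then have ?thesis by (rule case_b[OF nz hq(2) hqq _ hda hd(2,3,4) hr hi]) }
    moreover
    { assume "c = q^Suc N"
      then have ?thesis by (rule case_c[OF nz hq(2) hqq _ hda hd(1,3,4) hr hi]) }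
    ultimately show ?thesis using sp by blast
  qed
  show ?thesis unfolding L R1 C XX_def YY_def ..
qed

end
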